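(* Let $r\ge1$ and $\omega_1,\dots,\omega_r\in\mathbb{C}$ with $\mathrm{Re}(\omega_j)>0$. The function $Z(s,\boldsymbol\omega)$, defined by an absolutely convergent product for $\mathrm{Re}(s)>1$, extends meromorphically to $s\in\mathbb{C}$, and as meromorphic functions $$Z(s,(\omega_1,\dots,\omega_{r-1},\omega_r))=Z(s,(\omega_1,\dots,\omega_{r-1}))\cdot Z(s+\omega_r,(\omega_1,\dots,\omega_{r-1},\omega_r)),$$ and $$Z(s,\boldsymbol\omega)\times\prod_{j=1}^{r}\ \prod_{1\le k_1<\cdots<k_j\le r}Z(s+\omega_{k_1}+\cdots+\omega_{k_j},\boldsymbol\omega)^{(-1)^j}=\zeta(s).$$
   Context: $\zeta$ is the Riemann zeta function. For $\boldsymbol\omega=(\omega_1,\dots,\omega_r)$ with $\mathrm{Re}(\omega_j)>0$, $$Z(s,\boldsymbol\omega):=\prod_{n_1,\dots,n_r\ge0}\ \prod_{p\text{ prime}}\big(1-p^{-(s+n_1\omega_1+\cdots+n_r\omega_r)}\big)^{-1}=\prod_{n_1,\dots,n_r\ge0}\zeta(s+n_1\omega_1+\cdots+n_r\omega_r),$$ and for the empty tuple ($r=0$) the convention is $Z(s,())=\zeta(s)$. *)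

theory Defs
  imports "HOL-Complex_Analysis.Complex_Analysis"
begin

definition zeta_series :: "complex \<Rightarrow> complex" where
  "zeta_series s = (\<Sum>n. inverse (of_nat (Suc n) powr s))"

definition multi_idx :: "nat \<Rightarrow> (nat \<Rightarrow> nat) set" where
  "multi_idx r = PiE {..<r} (\<lambda>_. UNIV)"

definition idx_box :: "nat \<Rightarrow> nat \<Rightarrow> (nat \<Rightarrow> nat) set" where
  "idx_box r N = PiE {..<r} (\<lambda>_. {..<N})"

definition Z_factor :: "complex list \<Rightarrow> complex \<Rightarrow> (nat \<Rightarrow> nat) \<Rightarrow> complex" where
  "Z_factor ws s n = zeta_series (s + (\<Sum>i<length ws. of_nat (n i) * ws ! i))"

definition Z_partial :: "complex list \<Rightarrow> complex \<Rightarrow> nat \<Rightarrow> complex" where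
  "Z_partial ws s N = (\<Prod>n\<in>idx_box (length ws) N. Z_factor ws s n)"

definition Z_prod :: "complex list \<Rightarrow> complex \<Rightarrow> complex" where
  "Z_prod ws s = lim (Z_partial ws s)"

end

theory Submission
  imports Defs
begin

definition zt :: "nat \<Rightarrow> complex \<Rightarrow> complex" where
  "zt k s = (\<Sum>n. inverse (of_nat (n+k) powr s))"

definition zr :: "nat \<Rightarrow> real \<Rightarrow> real" where
  "zr k \<sigma> = (\<Sum>n. real (n+k) powr (-\<sigma>))"

lemma norm_inv_nat_powr: "norm (inverse (of_nat m powr s)) = real m powr (- Re s)"
proof -
  have "norm ((of_nat m :: complex) powr s) = real m powr Re s"
    by (subst norm_powr_real_powr) auto
  thus ?thesis by (simp add: norm_inverse powr_minus)
qed

lemma summable_real_powr_shift: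
  assumes "\<sigma> > 1" shows "summable (\<lambda>n. real (n+k) powr (-\<sigma>))"
proof -
  have "summable (\<lambda>n. real n powr (-\<sigma>))" using assms by (subst summable_real_powr_iff) auto
  thus ?thesis by (subst summable_iff_shift[where f="\<lambda>n. real n powr (-\<sigma>)"])
qed

lemma zt_summable_norm:
  assumes "Re s > 1" shows "summable (\<lambda>n. norm (inverse (of_nat (n+k) powr s)))"
proof -
  have "summable (\<lambda>n. real (n+k) powr (-Re s))" by (rule summable_real_powr_shift) (use assms in simp)
  thus ?thesis by (simp only: norm_inv_nat_powr)
qed

lemma zt_summable:
  assumes "Re s > 1" shows "summable (\<lambda>n. inverse (of_nat (n+k) powr s))"
  by (rule summable_norm_cancel[OF zt_summable_norm[OF assms]])

lemma zeta_series_zt: "zeta_series s = zt 1 s"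
  by (simp add: zeta_series_def zt_def)

lemma zt_split:
  assumes "Re s > 1"
  shows "zt k s = (\<Sum>j<m. inverse (of_nat (j+k) powr s)) + zt (k+m) s"
  using suminf_split_initial_segment[OF zt_summable[OF assms, of k], of m]
  by (simp add: zt_def add_ac)

lemma zt_bound:
  assumes "k \<ge> 1" "1 < \<sigma>0" "\<sigma>0 \<le> Re s"
  shows "norm (zt k s) \<le> zr k \<sigma>0 * real k powr (\<sigma>0 - Re s)"
proof -
  have le: "norm (inverse (of_nat (n+k) powr s)) \<le> real (n+k) powr (-\<sigma>0) * real k powr (\<sigma>0 - Re s)" for n
  proof -
    have "norm (inverse (of_nat (n+k) powr s)) = real (n+k) powr (-\<sigma>0) * real (n+k) powr (\<sigma>0 - Re s)"
      unfolding norm_inv_nat_powr by (simp add: powr_add[symmetric])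
    also have "\<dots> \<le> real (n+k) powr (-\<sigma>0) * real k powr (\<sigma>0 - Re s)"
      using assms by (intro mult_left_mono powr_mono2') auto
    finally show ?thesis .
  qed
  have "norm (zt k s) \<le> (\<Sum>n. real (n+k) powr (-\<sigma>0) * real k powr (\<sigma>0 - Re s))"
    unfolding zt_def
    by (rule norm_suminf_le[OF le]) (intro summable_mult2 summable_real_powr_shift assms)
  also have "\<dots> = zr k \<sigma>0 * real k powr (\<sigma>0 - Re s)"
    unfolding zr_def by (rule suminf_mult2[symmetric]) (intro summable_real_powr_shift assms)
  finally show ?thesis .
qed

lemma zr_nonneg: "\<sigma> > 1 \<Longrightarrow> zr k \<sigma> \<ge> 0"
  unfolding zr_def by (intro suminf_nonneg summable_real_powr_shift) auto

lemma zt_holomorphic: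
  assumes "k \<ge> 1"
  shows "zt k holomorphic_on {s. Re s > 1}"
proof -
  have op: "open {s::complex. Re s > 1}" by (simp add: open_halfspace_Re_gt)
  show ?thesis unfolding zt_def
  proof (rule holomorphic_uniform_sequence[OF op, where f="\<lambda>m s. \<Sum>n<m. inverse (of_nat (n+k) powr s)"])
    fix m
    show "(\<lambda>s. \<Sum>n<m. inverse (of_nat (n+k) powr s)) holomorphic_on {s. Re s > 1}"
    proof (intro holomorphic_intros holomorphic_on_powr_right)
      fix n s assume "n \<in> {..<m}"
      have "(of_nat (n+k) :: complex) \<noteq> 0" unfolding of_nat_eq_0_iff using assms by simp
      thus "of_nat (n+k) powr s \<noteq> (0::complex)" by (simp only: powr_eq_0_iff) simp
    qed
  next
    fix x :: complex assume x: "x \<in> {s. Re s > 1}"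
    define d where "d = (Re x - 1) / 2"
    have d: "d > 0" using x by (auto simp: d_def)
    have sub: "cball x d \<subseteq> {s. Re s \<ge> 1 + d}"
    proof
      fix y assume "y \<in> cball x d"
      hence "\<bar>Re x - Re y\<bar> \<le> d" using abs_Re_le_cmod[of "x - y"] by (auto simp: dist_norm)
      hence "Re x - Re y \<le> d" by (rule abs_le_D1)
      thus "y \<in> {s. Re s \<ge> 1 + d}" unfolding d_def by (simp add: field_simps)
    qed
    have "uniform_limit (cball x d) (\<lambda>m s. \<Sum>n<m. inverse (of_nat (n+k) powr s))
            (\<lambda>s. \<Sum>n. inverse (of_nat (n+k) powr s)) sequentially"
    proof (rule Weierstrass_m_test)
      fix n y assume "y \<in> cball x d"
      hence y: "Re y \<ge> 1 + d" using sub by auto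
      show "norm (inverse (of_nat (n+k) powr y)) \<le> real (n+k) powr (-(1+d))"
        unfolding norm_inv_nat_powr using y assms by (intro powr_mono) auto
    next
      show "summable (\<lambda>n. real (n+k) powr (-(1+d)))" using d by (intro summable_real_powr_shift) auto
    qed
    moreover have "cball x d \<subseteq> {s. Re s > 1}" using sub d by auto
    ultimately show "\<exists>d>0. cball x d \<subseteq> {s. Re s > 1} \<and>
       uniform_limit (cball x d) (\<lambda>m s. \<Sum>n<m. inverse (of_nat (n+k) powr s))
            (\<lambda>s. \<Sum>n. inverse (of_nat (n+k) powr s)) sequentially" using d by (intro exI[of _ d] conjI)
  qed
qed

lemma norm_gchoose_le:
  fixes a :: complex
  assumes "norm a \<le> real A"
  shows "norm (a gchoose k) \<le> 2 ^ (A + k)"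
proof -
  have "norm (a gchoose k) \<le> real ((A + k) choose k)"
  proof (induction k)
    case 0 thus ?case by simp
  next
    case (Suc k)
    have "norm (a - of_nat k) \<le> real (A + k)"
      using norm_triangle_ineq4[of a "of_nat k"] assms by simp
    have nk: "norm (of_nat k + 1 :: complex) = real k + 1"
      using norm_of_nat[of "Suc k", where 'a=complex] by (simp add: add.commute)
    have "norm (a gchoose Suc k) = norm (a gchoose k) * (norm (a - of_nat k) / (real k + 1))"
      by (simp add: gbinomial_Suc_rec norm_mult norm_divide nk)
    also have "\<dots> \<le> real ((A + k) choose k) * (real (A + k + 1) / (real k + 1))"
      using Suc.IH \<open>norm (a - of_nat k) \<le> real (A + k)\<close>
      by (intro mult_mono divide_right_mono) auto
    also have "\<dots> = real ((A + Suc k) choose Suc k)"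
    proof -
      have "real (Suc (A + k)) * real ((A + k) choose k) = real (Suc (A+k) choose Suc k) * real (Suc k)"
        by (subst of_nat_mult[symmetric])+ (rule arg_cong[where f=real], rule Suc_times_binomial_eq)
      thus ?thesis by (simp add: field_simps)
    qed
    finally show ?case .
  qed
  also have "\<dots> \<le> 2 ^ (A + k)"
    using binomial_le_pow2[of "A+k" k] by (metis of_nat_le_iff of_nat_numeral of_nat_power)
  finally show ?thesis .
qed

lemma cpowr_minus: "(x::complex) powr (-a) = inverse (x powr a)"
  by (simp add: powr_def exp_minus)

lemma infsum_suminf_nat:
  fixes f :: "nat \<Rightarrow> complex"
  assumes "summable (\<lambda>n. norm (f n))"
  shows "infsum f UNIV = suminf f"
proof -
  have "f summable_on UNIV" using norm_summable_imp_summable_on[OF assms] .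
  hence "f sums infsum f UNIV" by (intro has_sum_imp_sums has_sum_infsum)
  thus ?thesis by (simp add: sums_iff)
qed

lemma summable_on_prod_nonneg:
  fixes g h :: "nat \<Rightarrow> real"
  assumes "summable g" "summable h" "\<And>j. g j \<ge> 0" "\<And>k. h k \<ge> 0"
  shows "(\<lambda>(j,k). g j * h k) summable_on (UNIV \<times> UNIV)"
proof -
  have hs: "(h has_sum suminf h) UNIV" using assms(2,4)
    by (intro sums_nonneg_imp_has_sum) (auto simp: summable_sums)
  have gs: "g summable_on UNIV" using assms(1,3)
    by (intro norm_summable_imp_summable_on) auto
  show ?thesis
  proof (rule summable_on_SigmaI[where g="\<lambda>j. g j * suminf h"])
    fix j :: nat assume "j \<in> UNIV"
    show "((\<lambda>k. case (j, k) of (j, k) \<Rightarrow> g j * h k) has_sum g j * suminf h) UNIV"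
      using has_sum_cmult_right[OF hs, of "g j"] by simp
  next
    show "(\<lambda>j. g j * suminf h) summable_on UNIV"
      by (intro summable_on_cmult_left gs)
  next
    fix j k :: nat
    show "0 \<le> (case (j, k) of (j, k) \<Rightarrow> g j * h k)" using assms by simp
  qed
qed

definition cc :: "nat \<Rightarrow> complex \<Rightarrow> complex" where
  "cc k s = ((1 - s) gchoose k) * (-1) ^ k"

lemma cc_bound:
  assumes "norm (1 - s) \<le> real A"
  shows "norm (cc k s) \<le> 2 ^ (A + k)"
  using norm_gchoose_le[OF assms, of k] by (simp add: cc_def norm_mult norm_power)

lemma zeta_relation:
  assumes s: "Re s > 1"
  shows "summable (\<lambda>k. cc (k+2) s * zt 4 (s + of_nat (k+1)))"
    and "(s - 1) * zt 4 s + (\<Sum>k. cc (k+2) s * zt 4 (s + of_nat (k+1))) = 3 powr (1 - s)"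
proof -
  define a where "a = 1 - s"
  define \<sigma> where "\<sigma> = Re s"
  have \<sigma>: "\<sigma> > 1" using s by (simp add: \<sigma>_def)
  obtain A :: nat where A: "norm a \<le> real A" using real_arch_simple by blast
  define t where "t = (\<lambda>j k::nat. cc (k+1) s * inverse (of_nat (j+4) powr (s + of_nat k)))"
  define g where "g = (\<lambda>j::nat. real (j+4) powr (-\<sigma>))"
  define h where "h = (\<lambda>k::nat. 2 ^ (A+1) * (1/2::real) ^ k)"
  have g: "summable g" "\<And>j. g j \<ge> 0" using \<sigma> summable_real_powr_shift[of \<sigma> 4] by (auto simp: g_def)
  have h: "summable h" "\<And>k. h k \<ge> 0" by (auto simp: h_def intro!: summable_mult summable_geometric)
  have tb: "norm (t j k) \<le> g j * h k" for j k
  proof -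
    have "norm (t j k) = norm (cc (k+1) s) * real (j+4) powr (-(\<sigma> + real k))"
      unfolding t_def norm_mult norm_inv_nat_powr by (simp add: \<sigma>_def)
    also have "\<dots> \<le> 2 ^ (A + (k+1)) * (real (j+4) powr (-\<sigma>) * (1/4) ^ k)"
    proof (intro mult_mono)
      show "norm (cc (k+1) s) \<le> 2 ^ (A + (k+1))" using cc_bound[of s A "k+1"] A by (simp only: a_def)
      have "real (j+4) powr (-(\<sigma> + real k)) = real (j+4) powr (-\<sigma>) * real (j+4) powr (- real k)"
        by (simp add: powr_add[symmetric])
      also have "real (j+4) powr (- real k) \<le> 4 powr (- real k)"
        by (intro powr_mono2') auto
      also have "4 powr (- real k) = (1/4::real) ^ k"
        by (simp only: powr_minus powr_realpow[of 4 k] power_one_over inverse_eq_divide)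
      finally show "real (j+4) powr (-(\<sigma> + real k)) \<le> real (j+4) powr (-\<sigma>) * (1/4) ^ k"
        by (simp add: mult_left_mono)
    qed auto
    also have "\<dots> = g j * h k"
    proof -
      have q: "(1/4::real)^k = (1/2)^k * (1/2)^k" by (simp flip: power_mult_distrib)
      have "(2::real) ^ (A + (k+1)) * (1/2)^k * (1/2)^k = 2^(A+1) * (1/2)^k"
        by (simp add: power_add power_one_over)
      thus ?thesis unfolding g_def h_def q by (simp add: algebra_simps)
    qed
    finally show ?thesis .
  qed
  have summ2: "(\<lambda>(j,k). g j * h k) summable_on UNIV \<times> UNIV"
    by (rule summable_on_prod_nonneg) (use g h in auto)
  have "(\<lambda>x. norm ((\<lambda>(j,k). t j k) x)) summable_on UNIV \<times> UNIV"
    by (rule Infinite_Sum.abs_summable_on_comparison_test'[OF summ2]) (use tb in auto)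
  hence summt: "(\<lambda>(j,k). t j k) summable_on UNIV \<times> UNIV"
    by (simp only: summable_on_iff_abs_summable_on_complex)
  have swap: "(\<Sum>\<^sub>\<infinity>j. \<Sum>\<^sub>\<infinity>k. t j k) = (\<Sum>\<^sub>\<infinity>k. \<Sum>\<^sub>\<infinity>j. t j k)"
    by (rule infsum_swap_banach[OF summt])
  have nk: "summable (\<lambda>k. norm (t j k))" for j
    by (rule summable_comparison_test_ev[where g="\<lambda>k. g j * h k"])
       (use tb h in \<open>auto intro!: always_eventually summable_mult\<close>)
  have nj: "summable (\<lambda>j. norm (t j k))" for k
    by (rule summable_comparison_test_ev[where g="\<lambda>j. g j * h k"])
       (use tb g in \<open>auto intro!: always_eventually summable_mult2\<close>)
  have i1: "(\<Sum>\<^sub>\<infinity>k. t j k) = (\<Sum>k. t j k)" for j by (rule infsum_suminf_nat[OF nk])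
  have i2: "(\<Sum>\<^sub>\<infinity>j. t j k) = (\<Sum>j. t j k)" for k by (rule infsum_suminf_nat[OF nj])
  have bj: "norm (\<Sum>k. t j k) \<le> g j * suminf h" for j
  proof -
    have "norm (\<Sum>k. t j k) \<le> (\<Sum>k. g j * h k)"
      by (rule norm_suminf_le[OF tb]) (intro summable_mult h)
    also have "\<dots> = g j * suminf h" by (rule suminf_mult[OF h(1)])
    finally show ?thesis .
  qed
  have bk: "norm (\<Sum>j. t j k) \<le> h k * suminf g" for k
  proof -
    have "norm (\<Sum>j. t j k) \<le> (\<Sum>j. g j * h k)"
      by (rule norm_suminf_le[OF tb]) (intro summable_mult2 g)
    also have "\<dots> = suminf g * h k" by (rule suminf_mult2[OF g(1), symmetric])
    finally show ?thesis by (simp add: mult.commute)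
  qed
  have nout1: "summable (\<lambda>j. norm (\<Sum>k. t j k))"
    by (rule summable_comparison_test_ev[where g="\<lambda>j. g j * suminf h"])
       (use bj g in \<open>auto intro!: always_eventually summable_mult2\<close>)
  have nout2: "summable (\<lambda>k. norm (\<Sum>j. t j k))"
    by (rule summable_comparison_test_ev[where g="\<lambda>k. h k * suminf g"])
       (use bk h in \<open>auto intro!: always_eventually summable_mult2\<close>)
  have swap': "(\<Sum>j. \<Sum>k. t j k) = (\<Sum>k. \<Sum>j. t j k)"
    using swap unfolding i1 i2 infsum_suminf_nat[OF nout1] infsum_suminf_nat[OF nout2] .
  have inner: "(\<Sum>k. t j k) = of_nat (j+3) powr a - of_nat (j+4) powr a" for j
  proof -
    have "\<bar>-1::real\<bar> < \<bar>real (j+4)\<bar>" by simp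
    from gen_binomial_complex''[OF this, of a]
    have "(\<lambda>n. (a gchoose n) * of_real (real (j+4)) powr (a - of_nat n) * of_real (-1) ^ n) sums
            of_real (real (j+4) + -1) powr a" .
    from sums_split_initial_segment[OF this, of 1]
    have *: "(\<lambda>n. (a gchoose (n+1)) * of_real (real (j+4)) powr (a - of_nat (n+1)) * of_real (-1) ^ (n+1)) sums
            (of_real (real (j+4) + -1) powr a - (a gchoose 0) * of_real (real (j+4)) powr (a - of_nat 0) * of_real (-1) ^ 0)"
      by (simp only: lessThan_Suc_eq_insert_0 lessThan_0 image_empty sum.insert sum.empty finite.emptyI
          empty_iff not_False_eq_True add_0_right One_nat_def)
    have e1: "(of_real (real (j+4) + -1) :: complex) = of_nat (j+3)" by simp
    have e2: "(of_real (real (j+4)) :: complex) = of_nat (j+4)" by simp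
    have "(\<lambda>n. (a gchoose (n+1)) * of_nat (j+4) powr (a - of_nat (n+1)) * (-1) ^ (n+1)) sums
            (of_nat (j+3) powr a - of_nat (j+4) powr a)"
      using * unfolding e1 e2 by simp
    moreover have "(a gchoose (n+1)) * of_nat (j+4) powr (a - of_nat (n+1)) * (-1) ^ (n+1) = t j n" for n
    proof -
      have "a - of_nat (n+1) = - (s + of_nat n)" by (simp add: a_def)
      hence "(of_nat (j+4) :: complex) powr (a - of_nat (n+1)) = inverse (of_nat (j+4) powr (s + of_nat n))"
        by (simp only: cpowr_minus)
      thus ?thesis by (simp add: t_def cc_def a_def)
    qed
    ultimately show ?thesis by (simp add: sums_iff)
  qed
  have tel: "(\<Sum>j. \<Sum>k. t j k) = 3 powr a"
  proof -
    have lim: "(\<lambda>j. (of_nat (j+3) :: complex) powr a) \<longlonglongrightarrow> 0"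
      by (rule tendsto_neg_powr_complex_of_nat) (use s in \<open>auto simp: a_def filterlim_add_const_nat_at_top\<close>)
    from telescope_sums'[OF lim]
    have "(\<lambda>j. of_nat (j+3) powr a - of_nat (Suc j + 3) powr a) sums (of_nat (0+3) powr a - 0)" .
    hence "(\<lambda>j. \<Sum>k. t j k) sums (3 powr a)" unfolding inner by (simp add: add_ac)
    thus ?thesis by (simp add: sums_iff)
  qed
  have outer: "(\<Sum>j. t j k) = cc (k+1) s * zt 4 (s + of_nat k)" for k
    unfolding t_def zt_def by (rule suminf_mult[OF zt_summable]) (use s in simp)
  have S: "(\<Sum>k. cc (k+1) s * zt 4 (s + of_nat k)) = 3 powr a"
    using swap' tel unfolding outer by simp
  have summS: "summable (\<lambda>k. cc (k+1) s * zt 4 (s + of_nat k))"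
    using summable_norm_cancel[OF nout2] unfolding outer .
  have h1: "(\<Sum>k. cc (Suc k + 1) s * zt 4 (s + of_nat (Suc k))) =
      (\<Sum>k. cc (k+1) s * zt 4 (s + of_nat k)) - cc (0+1) s * zt 4 (s + of_nat 0)"
    by (rule suminf_split_head[OF summS])
  have eqf: "(\<lambda>k. cc (Suc k + 1) s * zt 4 (s + of_nat (Suc k))) = (\<lambda>k. cc (k+2) s * zt 4 (s + of_nat (k+1)))"
    by (rule ext) (simp only: Suc_eq_plus1 add.assoc one_add_one)
  have c1: "cc (0+1) s * zt 4 (s + of_nat 0) = (s - 1) * zt 4 s" by (simp add: cc_def)
  have X: "(\<Sum>k. cc (k+2) s * zt 4 (s + of_nat (k+1))) = 3 powr (1 - s) - (s - 1) * zt 4 s"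
    using h1 unfolding eqf c1 S a_def .
  show "(s - 1) * zt 4 s + (\<Sum>k. cc (k+2) s * zt 4 (s + of_nat (k+1))) = 3 powr (1 - s)"
    unfolding X by (simp only: add_diff_eq add_diff_cancel_left')
  have "summable (\<lambda>k. cc (Suc k + 1) s * zt 4 (s + of_nat (Suc k)))"
    using summS by (rule summable_Suc_iff[THEN iffD2])
  thus "summable (\<lambda>k. cc (k+2) s * zt 4 (s + of_nat (k+1)))" unfolding eqf .
qed

lemma mero_zero_on_open:
  assumes mero: "f meromorphic_on A" and A: "open A" "connected A"
      and B: "open B" "b \<in> B" "B \<subseteq> A" and zero: "\<And>s. s \<in> B \<Longrightarrow> f s = 0"
  shows "\<forall>\<^sub>\<approx>s\<in>A. f s = 0"
proof -
  have "(\<forall>\<^sub>\<approx>s\<in>A. f s = 0) \<or> (\<forall>\<^sub>\<approx>s\<in>A. f s \<noteq> 0)"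
    by (rule meromorphic_imp_constant_or_avoid[OF mero A])
  moreover have "\<not> (\<forall>\<^sub>\<approx>s\<in>A. f s \<noteq> 0)"
  proof
    assume "\<forall>\<^sub>\<approx>s\<in>A. f s \<noteq> 0"
    hence "eventually (\<lambda>s. f s \<noteq> 0) (at b within UNIV)"
      by (rule eventually_cosparse_imp_eventually_at) (use B in auto)
    hence ev1: "eventually (\<lambda>s. f s \<noteq> 0) (at b)" by simp
    have ev2: "eventually (\<lambda>s. s \<in> B) (at b)" by (rule eventually_at_in_open'[OF B(1,2)])
    have "eventually (\<lambda>s. False) (at b)"
      using ev1 ev2 by eventually_elim (use zero in auto)
    thus False by (simp add: trivial_limit_at)
  qed
  ultimately show ?thesis by blast
qed

lemma mero_zero_on_open_at:
  assumes "f meromorphic_on A" "open A" "connected A"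
      "open B" "b \<in> B" "B \<subseteq> A" "\<And>s. s \<in> B \<Longrightarrow> f s = 0" "z \<in> A"
  shows "eventually (\<lambda>s. f s = 0) (at z)"
  using mero_zero_on_open[OF assms(1-7)] assms(2,8) by (simp add: eventually_cosparse_open_eq)

primrec FF :: "nat \<Rightarrow> complex \<Rightarrow> complex" where
  "FF 0 = zt 4"
| "FF (Suc d) = (\<lambda>s. (3 powr (1 - s) - (\<Sum>k. cc (k+2) s * FF d (s + of_nat (k+1)))) / (s - 1))"

lemma FF_eq: "Re s > 1 \<Longrightarrow> FF d s = zt 4 s"
proof (induction d arbitrary: s)
  case 0 thus ?case by simp
next
  case (Suc d)
  have "(\<Sum>k. cc (k+2) s * FF d (s + of_nat (k+1))) = (\<Sum>k. cc (k+2) s * zt 4 (s + of_nat (k+1)))"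
    using Suc by (intro suminf_cong) (subst Suc.IH, auto)
  also have "\<dots> = 3 powr (1 - s) - (s - 1) * zt 4 s"
    using zeta_relation(2)[OF Suc.prems] by (simp add: algebra_simps)
  finally have *: "(\<Sum>k. cc (k+2) s * FF d (s + of_nat (k+1))) = 3 powr (1 - s) - (s - 1) * zt 4 s" .
  have ne: "s - 1 \<noteq> 0" using Suc.prems by auto
  have "FF (Suc d) s = (3 powr (1 - s) - (\<Sum>k. cc (k+2) s * FF d (s + of_nat (k+1)))) / (s - 1)"
    by (simp only: FF.simps)
  also have "\<dots> = ((s - 1) * zt 4 s) / (s - 1)" unfolding * by simp
  also have "\<dots> = zt 4 s" using ne by simp
  finally show ?case .
qed

definition TT :: "nat \<Rightarrow> complex \<Rightarrow> complex" where
  "TT K s = (\<Sum>k. cc (k+K+2) s * zt 4 (s + of_nat (k+K+1)))"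

lemma TT_bound:
  assumes "Re s > 3/2 - real K" "norm (1 - s) \<le> real A"
  shows "norm (cc (k+K+2) s * zt 4 (s + of_nat (k+K+1))) \<le> 2^(A+K+2) * zr 4 2 * (1/2)^k"
proof -
  have c: "norm (cc (k+K+2) s) \<le> 2^(A+K+2) * 2^k"
    using cc_bound[OF assms(2), of "k+K+2"] by (simp add: power_add mult_ac)
  have re: "Re (s + of_nat (k+K+1)) \<ge> 5/2 + real k" using assms(1) by simp
  have "norm (zt 4 (s + of_nat (k+K+1))) \<le> zr 4 2 * real 4 powr (2 - Re (s + of_nat (k+K+1)))"
    by (rule zt_bound) (use re in auto)
  also have "\<dots> \<le> zr 4 2 * 4 powr (- real k)"
    by (intro mult_left_mono zr_nonneg powr_mono) (use re in auto)
  also have "4 powr (- real k) = (1/4::real) ^ k"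
    by (simp only: powr_minus powr_realpow[of 4 k] power_one_over inverse_eq_divide)
  finally have z: "norm (zt 4 (s + of_nat (k+K+1))) \<le> zr 4 2 * (1/4) ^ k" .
  have "norm (cc (k+K+2) s * zt 4 (s + of_nat (k+K+1))) \<le> (2^(A+K+2) * 2^k) * (zr 4 2 * (1/4) ^ k)"
    unfolding norm_mult by (intro mult_mono c z) (auto intro: zr_nonneg)
  also have "\<dots> = 2^(A+K+2) * zr 4 2 * (1/2)^k"
  proof -
    have q: "(1/4::real)^k = (1/2)^k * (1/2)^k" by (simp flip: power_mult_distrib)
    have r: "(2::real)^k * (1/2)^k = 1" by (simp flip: power_mult_distrib)
    show ?thesis unfolding q using r by (simp add: algebra_simps)
  qed
  finally show ?thesis .
qed

lemma zt_shift_holo: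
  assumes "\<And>s. s \<in> S \<Longrightarrow> Re (s + c) > 1" "k \<ge> 1"
  shows "(\<lambda>s. zt k (s + c)) holomorphic_on S"
proof -
  have "zt k \<circ> (\<lambda>s. s + c) holomorphic_on S"
    by (rule holomorphic_on_compose_gen[OF _ zt_holomorphic[OF assms(2)]])
       (use assms(1) in \<open>auto intro!: holomorphic_intros\<close>)
  thus ?thesis by (simp add: o_def)
qed

lemma cc_analytic: "cc j analytic_on S"
proof -
  have "(\<lambda>s. (1 - s) gchoose j) analytic_on S"
    by (intro analytic_on_gbinomial analytic_intros)
  thus ?thesis unfolding cc_def[abs_def] by (intro analytic_intros)
qed

lemma powr3_analytic: "(\<lambda>s. (3::complex) powr (1 - s)) analytic_on S"
  by (rule analytic_on_powr) (auto intro!: analytic_intros simp: complex_nonpos_Reals_iff)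

definition UU :: "nat \<Rightarrow> nat \<Rightarrow> complex set" where
  "UU K A = {s. 3/2 - real K < Re s} \<inter> ball 1 (real A)"

lemma UU_open: "open (UU K A)"
  unfolding UU_def by (intro open_Int open_halfspace_Re_gt open_ball)

lemma UU_bound:
  assumes "s \<in> UU K A"
  shows "norm (cc (k+K+2) s * zt 4 (s + of_nat (k+K+1))) \<le> 2^(A+K+2) * zr 4 2 * (1/2)^k"
  using assms by (intro TT_bound) (auto simp: UU_def dist_norm)

lemma TT_summable:
  assumes "s \<in> UU K A"
  shows "summable (\<lambda>k. cc (k+K+2) s * zt 4 (s + of_nat (k+K+1)))"
  by (rule summable_comparison_test_ev[where g="\<lambda>k. 2^(A+K+2) * zr 4 2 * (1/2)^k"])
     (use UU_bound[OF assms] in \<open>auto intro!: always_eventually summable_mult summable_geometric\<close>)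

lemma TT_holo: "TT K holomorphic_on UU K A"
  unfolding TT_def
proof (rule holomorphic_uniform_sequence[OF UU_open,
      where f="\<lambda>n s. \<Sum>k<n. cc (k+K+2) s * zt 4 (s + of_nat (k+K+1))"])
  fix n
  show "(\<lambda>s. \<Sum>k<n. cc (k+K+2) s * zt 4 (s + of_nat (k+K+1))) holomorphic_on UU K A"
  proof (intro holomorphic_on_sum holomorphic_on_mult)
    fix k
    show "cc (k+K+2) holomorphic_on UU K A" using cc_analytic analytic_imp_holomorphic by blast
    show "(\<lambda>s. zt 4 (s + of_nat (k+K+1))) holomorphic_on UU K A"
      by (rule zt_shift_holo) (auto simp: UU_def)
  qed
next
  fix x assume x: "x \<in> UU K A"
  then obtain d where d: "d > 0" "cball x d \<subseteq> UU K A"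
    using UU_open open_contains_cball by blast
  have "uniform_limit (cball x d) (\<lambda>n s. \<Sum>k<n. cc (k+K+2) s * zt 4 (s + of_nat (k+K+1)))
          (\<lambda>s. \<Sum>k. cc (k+K+2) s * zt 4 (s + of_nat (k+K+1))) sequentially"
    by (rule Weierstrass_m_test[where M="\<lambda>k. 2^(A+K+2) * zr 4 2 * (1/2)^k"])
       (use d UU_bound in \<open>auto intro!: summable_mult summable_geometric\<close>)
  thus "\<exists>d>0. cball x d \<subseteq> UU K A \<and> uniform_limit (cball x d)
          (\<lambda>n s. \<Sum>k<n. cc (k+K+2) s * zt 4 (s + of_nat (k+K+1)))
          (\<lambda>s. \<Sum>k. cc (k+K+2) s * zt 4 (s + of_nat (k+K+1))) sequentially"
    using d by (intro exI[of _ d] conjI)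
qed

lemma FF_mero: "FF d meromorphic_on {s. Re s > 1 - real d}"
proof (induction d)
  case 0
  have "zt 4 analytic_on {s. Re s > 1}"
    using zt_holomorphic[of 4] by (subst analytic_on_open) (auto simp: open_halfspace_Re_gt)
  thus ?case by (auto intro: analytic_on_imp_meromorphic_on)
next
  case (Suc d)
  show ?case
  proof (subst meromorphic_on_meromorphic_at, intro ballI)
    fix z assume z: "z \<in> {s. Re s > 1 - real (Suc d)}"
    obtain K :: nat where K: "2 - Re z \<le> real K" using real_arch_simple by blast
    obtain A :: nat where A: "norm (1 - z) + 1 \<le> real A" using real_arch_simple by blast
    define U where "U = UU K A \<inter> {s. Re s > - real d}"
    have U: "open U" unfolding U_def by (intro open_Int UU_open open_halfspace_Re_gt)
    have zU: "z \<in> U" using z K A by (auto simp: U_def UU_def dist_norm)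
    define G where "G = (\<lambda>s. (3 powr (1 - s) - ((\<Sum>k<K. cc (k+2) s * FF d (s + of_nat (k+1))) + TT K s)) / (s - 1))"
    have eq: "FF (Suc d) s = G s" if s: "s \<in> U" for s
    proof -
      define f where "f = (\<lambda>k. cc (k+2) s * FF d (s + of_nat (k+1)))"
      have sU: "s \<in> UU K A" using s by (auto simp: U_def)
      have fK: "f (k + K) = cc (k+K+2) s * zt 4 (s + of_nat (k+K+1))" for k
      proof -
        have "Re (s + of_nat (k+K+1)) > 1" using sU by (auto simp: UU_def)
        thus ?thesis unfolding f_def by (simp add: FF_eq)
      qed
      have "summable (\<lambda>k. f (k + K))" unfolding fK by (rule TT_summable[OF sU])
      hence sf: "summable f" by (rule summable_iff_shift[THEN iffD1])
      have "suminf f = (\<Sum>k. f (k + K)) + sum f {..<K}" by (rule suminf_split_initial_segment[OF sf])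
      also have "(\<Sum>k. f (k + K)) = TT K s" unfolding fK TT_def ..
      finally have "suminf f = sum f {..<K} + TT K s" by simp
      thus ?thesis unfolding G_def FF.simps f_def by simp
    qed
    have m1: "(\<lambda>s. FF d (s + of_nat (k+1))) meromorphic_on {z}" for k
      by (rule meromorphic_on_compose[OF Suc.IH]) (use z in \<open>auto intro!: analytic_intros\<close>)
    have m2: "TT K analytic_on {z}"
    proof (rule analytic_on_subset)
      show "TT K analytic_on UU K A" using TT_holo UU_open by (subst analytic_on_open) auto
      show "{z} \<subseteq> UU K A" using zU by (auto simp: U_def)
    qed
    have m3: "cc j meromorphic_on {z}" for j by (intro analytic_on_imp_meromorphic_on cc_analytic)
    have m4: "(\<lambda>s. 3 powr (1 - s)) meromorphic_on {z}"
      by (intro analytic_on_imp_meromorphic_on powr3_analytic)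
    have "G meromorphic_on {z}"
      unfolding G_def
      by (intro meromorphic_on_divide meromorphic_on_diff meromorphic_on_add meromorphic_on_sum
          meromorphic_on_mult m1 m3 m4 analytic_on_imp_meromorphic_on[OF m2] meromorphic_on_id meromorphic_on_const)
    moreover have "eventually (\<lambda>s. FF (Suc d) s = G s) (at z)"
      using eventually_at_in_open'[OF U zU] by eventually_elim (rule eq)
    ultimately show "FF (Suc d) meromorphic_on {z}"
      by (subst meromorphic_on_cong[where g=G and B="{z}"]) auto
  qed
qed

lemma H_open: "open {s::complex. Re s > c}" by (rule open_halfspace_Re_gt)
lemma H_conn: "connected {s::complex. Re s > c}" by (rule convex_connected[OF convex_halfspace_Re_gt])

lemma FF_cons:
  assumes "Re z > 1 - real d"
  shows "eventually (\<lambda>s. FF (Suc d) s = FF d s) (at z)"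
proof -
  have m: "(\<lambda>s. FF (Suc d) s - FF d s) meromorphic_on {s. Re s > 1 - real d}"
  proof (intro meromorphic_on_diff)
    show "FF (Suc d) meromorphic_on {s. Re s > 1 - real d}"
      by (rule meromorphic_on_subset[OF FF_mero]) auto
  qed (rule FF_mero)
  have "eventually (\<lambda>s. FF (Suc d) s - FF d s = 0) (at z)"
  proof (rule mero_zero_on_open_at[OF m H_open H_conn H_open[of 1]])
    show "2 \<in> {s::complex. Re s > 1}" by simp
    show "{s::complex. Re s > 1} \<subseteq> {s. Re s > 1 - real d}" by auto
    show "FF (Suc d) s - FF d s = 0" if "s \<in> {s. Re s > 1}" for s
    proof -
      have h: "Re s > 1" using that by simp
      show ?thesis using FF_eq[OF h, of "Suc d"] FF_eq[OF h, of d] by (simp only: diff_self)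
    qed
    show "z \<in> {s. Re s > 1 - real d}" using assms by simp
  qed
  thus ?thesis by simp
qed

lemma FF_cons2:
  assumes "d \<le> d'" "Re z > 1 - real d"
  shows "eventually (\<lambda>s. FF d' s = FF d s) (at z)"
  using assms(1)
proof (induction d' rule: dec_induct)
  case base thus ?case by simp
next
  case (step n)
  have "eventually (\<lambda>s. FF (Suc n) s = FF n s) (at z)"
    by (rule FF_cons) (use assms step in auto)
  with step.IH show ?case by eventually_elim simp
qed

definition DD :: "complex \<Rightarrow> nat" where
  "DD s = nat \<lceil>1 - Re s\<rceil> + 2"

definition zeta_ext :: "complex \<Rightarrow> complex" where
  "zeta_ext s = 1 + inverse (2 powr s) + inverse (3 powr s) + FF (DD s) s"

lemma DD_ge: "real (DD s) \<ge> 3 - Re s"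
proof -
  have "1 - Re s \<le> of_int \<lceil>1 - Re s\<rceil>" by (rule le_of_int_ceiling)
  moreover have "real (DD s) = max 0 (of_int \<lceil>1 - Re s\<rceil>) + 2" by (simp add: DD_def real_nat)
  ultimately show ?thesis by linarith
qed

lemma nat_aux:
  assumes "(x::int) \<le> y + 1" shows "nat x + 2 \<le> nat y + 2 + 1"
proof -
  have "int (nat x) \<le> int (nat y) + 1" using assms by (simp add: int_nat_eq)
  thus ?thesis by linarith
qed

lemma DD_near:
  assumes "dist s z < 1/2"
  shows "DD s \<le> DD z + 1" "Re z > 1 - real (DD s)"
proof -
  have "\<bar>Re s - Re z\<bar> \<le> norm (s - z)" using abs_Re_le_cmod[of "s - z"] by simp
  hence r: "\<bar>Re s - Re z\<bar> < 1/2" using assms by (simp add: dist_norm)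
  have "of_int \<lceil>1 - Re s\<rceil> - 1 < 1 - Re s" "1 - Re z \<le> of_int \<lceil>1 - Re z\<rceil>"
    using ceiling_correct[of "1 - Re s"] ceiling_correct[of "1 - Re z"] by auto
  hence "of_int \<lceil>1 - Re s\<rceil> < of_int \<lceil>1 - Re z\<rceil> + (2::real)" using r by linarith
  hence "\<lceil>1 - Re s\<rceil> < \<lceil>1 - Re z\<rceil> + 2" by linarith
  hence "\<lceil>1 - Re s\<rceil> \<le> \<lceil>1 - Re z\<rceil> + 1" by linarith
  thus "DD s \<le> DD z + 1" unfolding DD_def using nat_aux by blast
  show "Re z > 1 - real (DD s)" using DD_ge[of s] r by linarith
qed

lemma one_powr_complex: "(1::complex) powr s = 1" by (simp add: powr_def)

lemma zeta_ext_eq: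
  assumes "Re s > 1"
  shows "zeta_ext s = zeta_series s"
proof -
  have "zeta_series s = (\<Sum>j<3. inverse (of_nat (j+1) powr s)) + zt (1+3) s"
    unfolding zeta_series_zt by (rule zt_split[OF assms])
  also have "(\<Sum>j<3. inverse (of_nat (j+1) powr s)) = 1 + inverse (2 powr s) + inverse (3 powr s)"
    by (simp add: numeral_3_eq_3 lessThan_Suc one_powr_complex)
  finally show ?thesis unfolding zeta_ext_def using FF_eq[OF assms] by simp
qed

lemma zeta_ext_mero: "zeta_ext meromorphic_on UNIV"
proof (subst meromorphic_on_meromorphic_at, intro ballI)
  fix z :: complex
  define d0 where "d0 = DD z + 1"
  have zd0: "Re z > 1 - real d0" using DD_ge[of z] by (simp add: d0_def)
  define G where "G = (\<lambda>s. 1 + inverse (2 powr s) + inverse (3 powr s) + FF d0 s)"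
  have "G meromorphic_on {z}"
  proof -
    have m1: "FF d0 meromorphic_on {z}" by (rule meromorphic_on_subset[OF FF_mero]) (use zd0 in auto)
    have m2: "(\<lambda>s. inverse ((c::complex) powr s)) meromorphic_on {z}" if "c \<in> {2,3}" for c
      by (intro analytic_on_imp_meromorphic_on)
         (use that in \<open>auto intro!: analytic_intros simp: complex_nonpos_Reals_iff\<close>)
    show ?thesis unfolding G_def
      by (intro meromorphic_on_add meromorphic_on_const m1 m2) auto
  qed
  moreover have "eventually (\<lambda>s. zeta_ext s = G s) (at z)"
  proof -
    have fin: "finite {d. d \<le> d0 \<and> Re z > 1 - real d}" by auto
    have ev1: "eventually (\<lambda>s. \<forall>d\<in>{d. d \<le> d0 \<and> Re z > 1 - real d}. FF d0 s = FF d s) (at z)"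
      by (rule eventually_ball_finite[OF fin]) (auto intro!: FF_cons2)
    have ev2: "eventually (\<lambda>s. s \<in> ball z (1/2)) (at z)"
      by (rule eventually_at_in_open') auto
    show ?thesis using ev1 ev2
    proof eventually_elim
      case (elim s)
      have "dist s z < 1/2" using elim(2) by (simp add: dist_commute)
      from DD_near[OF this] have "DD s \<le> d0" "Re z > 1 - real (DD s)" by (auto simp: d0_def)
      hence "FF d0 s = FF (DD s) s" using elim(1) by auto
      thus ?case by (simp add: zeta_ext_def G_def)
    qed
  qed
  ultimately show "zeta_ext meromorphic_on {z}"
    by (subst meromorphic_on_cong[where g=G and B="{z}"]) auto
qed

definition absn :: "nat \<Rightarrow> (nat \<Rightarrow> nat) \<Rightarrow> nat" where
  "absn r n = (\<Sum>i<r. n i)"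

lemma finite_box: "finite (idx_box r N)"
  unfolding idx_box_def by (intro finite_PiE) auto

lemma box_sub_multi: "idx_box r N \<subseteq> multi_idx r"
  unfolding idx_box_def multi_idx_def by (intro PiE_mono) auto

lemma box_mono: "N \<le> M \<Longrightarrow> idx_box r N \<subseteq> idx_box r M"
  unfolding idx_box_def by (intro PiE_mono) auto

lemma box_sum_pow:
  fixes x :: real
  shows "(\<Sum>n\<in>idx_box r N. x ^ absn r n) = (\<Sum>m<N. x^m) ^ r"
proof -
  have "(\<Prod>i<r. \<Sum>m<N. x^m) = (\<Sum>g\<in>PiE {..<r} (\<lambda>_. {..<N}). \<Prod>i<r. x ^ g i)"
    by (rule prod_sum_PiE) auto
  also have "\<dots> = (\<Sum>n\<in>idx_box r N. x ^ absn r n)"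
    unfolding idx_box_def absn_def by (simp add: power_sum)
  finally show ?thesis by simp
qed

lemma geom_le: "0 \<le> (x::real) \<Longrightarrow> x < 1 \<Longrightarrow> (\<Sum>m<N. x^m) \<le> 1 / (1 - x)"
  using sum_gp_strict[of x N] by (auto simp: divide_right_mono)

lemma box_sum_le:
  fixes x :: real
  assumes "0 \<le> x" "x < 1"
  shows "(\<Sum>n\<in>idx_box r N. x ^ absn r n) \<le> (1 / (1 - x)) ^ r"
  unfolding box_sum_pow by (intro power_mono geom_le assms sum_nonneg) (use assms in auto)

lemma finite_sub_box:
  assumes "finite F" "F \<subseteq> multi_idx r"
  shows "F \<subseteq> idx_box r (Suc (\<Sum>n\<in>F. absn r n))"
proof
  fix n assume n: "n \<in> F"
  have "n i < Suc (\<Sum>n\<in>F. absn r n)" if "i < r" for i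
  proof -
    have "n i \<le> absn r n" unfolding absn_def
      using that by (intro member_le_sum) auto
    also have "\<dots> \<le> (\<Sum>n\<in>F. absn r n)" by (rule member_le_sum) (use n assms in auto)
    finally show ?thesis by simp
  qed
  thus "n \<in> idx_box r (Suc (\<Sum>n\<in>F. absn r n))"
    using assms n unfolding idx_box_def multi_idx_def by (auto simp: PiE_iff)
qed

lemma finite_sum_le:
  fixes x :: real
  assumes "0 \<le> x" "x < 1" "finite F" "F \<subseteq> multi_idx r"
  shows "(\<Sum>n\<in>F. x ^ absn r n) \<le> (1 / (1 - x)) ^ r"
proof -
  let ?M = "Suc (\<Sum>n\<in>F. absn r n)"
  have "(\<Sum>n\<in>F. x ^ absn r n) \<le> (\<Sum>n\<in>idx_box r ?M. x ^ absn r n)"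
    by (rule sum_mono2[OF finite_box finite_sub_box[OF assms(3,4)]]) (use assms in auto)
  also have "\<dots> \<le> (1 / (1 - x)) ^ r" by (rule box_sum_le[OF assms(1,2)])
  finally show ?thesis .
qed

lemma not_box_absn:
  assumes "n \<in> multi_idx r" "n \<notin> idx_box r N"
  shows "absn r n \<ge> N"
proof -
  obtain i where i: "i < r" "n i \<ge> N"
    using assms unfolding multi_idx_def idx_box_def by (auto simp: PiE_iff not_less)
  have "n i \<le> absn r n" unfolding absn_def using i by (intro member_le_sum) auto
  with i show ?thesis by simp
qed

definition cmin :: "complex list \<Rightarrow> real" where
  "cmin vs = (if vs = [] then 1 else Min (Re ` set vs))"

definition yy :: "complex list \<Rightarrow> real" where
  "yy vs = 2 powr (- cmin vs / 2)"

lemma cmin_pos: "\<forall>v\<in>set vs. Re v > 0 \<Longrightarrow> cmin vs > 0"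
  unfolding cmin_def by auto

lemma cmin_le: "i < length vs \<Longrightarrow> cmin vs \<le> Re (vs ! i)"
  unfolding cmin_def by (auto intro!: Min_le)

lemma yy_pos: "yy vs > 0" by (simp add: yy_def)

lemma yy_less1: "\<forall>v\<in>set vs. Re v > 0 \<Longrightarrow> yy vs < 1"
  using cmin_pos[of vs] unfolding yy_def by (simp add: powr_less_one)

lemma Z_factor_minus1:
  assumes "Re (s + (\<Sum>i<length vs. of_nat (n i) * vs ! i)) > 1"
  shows "Z_factor vs s n - 1 = zt 2 (s + (\<Sum>i<length vs. of_nat (n i) * vs ! i))"
  using zt_split[OF assms, of 1 1]
  unfolding Z_factor_def zeta_series_zt by (simp add: one_powr_complex numeral_2_eq_2)

lemma Re_shift_ge:
  assumes "\<forall>v\<in>set vs. Re v > 0"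
  shows "Re (s + (\<Sum>i<length vs. of_nat (n i) * vs ! i)) \<ge> Re s + cmin vs * real (absn (length vs) n)"
proof -
  have "cmin vs * real (absn (length vs) n) = (\<Sum>i<length vs. real (n i) * cmin vs)"
    unfolding absn_def by (simp add: sum_distrib_left mult.commute)
  also have "\<dots> \<le> (\<Sum>i<length vs. real (n i) * Re (vs ! i))"
    by (intro sum_mono mult_left_mono cmin_le) auto
  also have "\<dots> = Re (\<Sum>i<length vs. of_nat (n i) * vs ! i)" by (simp add: Re_sum)
  finally show ?thesis by simp
qed

lemma KB:
  assumes pos: "\<forall>v\<in>set vs. Re v > 0" and \<sigma>: "1 < \<sigma>0" "\<sigma>0 \<le> Re s"
  shows "norm (Z_factor vs s n - 1) \<le> zr 2 \<sigma>0 * 2 powr (\<sigma>0 - Re s) * (yy vs ^ absn (length vs) n * yy vs ^ absn (length vs) n)"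
proof -
  define w where "w = s + (\<Sum>i<length vs. of_nat (n i) * vs ! i)"
  define k where "k = absn (length vs) n"
  define c where "c = cmin vs"
  have c: "c > 0" using cmin_pos[OF pos] by (simp add: c_def)
  have rw: "Re w \<ge> Re s + c * real k" using Re_shift_ge[OF pos, of s n] by (simp add: w_def c_def k_def)
  have ck: "c * real k \<ge> 0" using c by simp
  have "Re w > 1" using rw ck \<sigma> by linarith
  hence "Z_factor vs s n - 1 = zt 2 w" unfolding w_def by (rule Z_factor_minus1)
  hence "norm (Z_factor vs s n - 1) \<le> zr 2 \<sigma>0 * 2 powr (\<sigma>0 - Re w)"
    using zt_bound[of 2 \<sigma>0 w] \<sigma> rw ck by simp
  also have "(2::real) powr (\<sigma>0 - Re w) \<le> 2 powr (\<sigma>0 - Re s - c * real k)"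
    using rw by (intro powr_mono) auto
  also have "2 powr (\<sigma>0 - Re s - c * real k) = 2 powr (\<sigma>0 - Re s) * (yy vs ^ k * yy vs ^ k)"
  proof -
    have "yy vs ^ k = 2 powr (- c / 2 * real k)"
      unfolding yy_def c_def by (simp add: powr_realpow[symmetric] powr_powr)
    hence "yy vs ^ k * yy vs ^ k = 2 powr (- c * real k)"
      by (simp add: powr_add[symmetric])
    thus ?thesis by (simp add: powr_add[symmetric])
  qed
  finally show ?thesis using zr_nonneg[of \<sigma>0 2] \<sigma>
    by (simp add: k_def mult_left_mono mult.assoc)
qed

lemma norm_prod_minus1_gen:
  fixes f :: "'b \<Rightarrow> complex"
  shows "norm (prod (\<lambda>n. 1 + f n) A - 1) \<le> prod (\<lambda>n. 1 + norm (f n)) A - 1"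
proof (induction A rule: infinite_finite_induct)
  case (insert x A)
  from insert.hyps have
    "norm ((\<Prod>n\<in>insert x A. 1 + f n) - 1) =
       norm ((\<Prod>n\<in>A. 1 + f n) - 1 + f x * (\<Prod>n\<in>A. 1 + f n))"
    by (simp add: algebra_simps)
  also have "\<dots> \<le> norm ((\<Prod>n\<in>A. 1 + f n) - 1) + norm (f x * (\<Prod>n\<in>A. 1 + f n))"
    by (rule norm_triangle_ineq)
  also have "norm (f x * (\<Prod>n\<in>A. 1 + f n)) = norm (f x) * (\<Prod>x\<in>A. norm (1 + f x))"
    by (simp add: prod_norm norm_mult)
  also have "(\<Prod>x\<in>A. norm (1 + f x)) \<le> (\<Prod>x\<in>A. norm (1::complex) + norm (f x))"
    by (intro prod_mono norm_triangle_ineq ballI conjI) auto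
  also have "norm (1::complex) = 1" by simp
  also note insert.IH
  also have "(\<Prod>n\<in>A. 1 + norm (f n)) - 1 + norm (f x) * (\<Prod>x\<in>A. 1 + norm (f x)) =
             (\<Prod>n\<in>insert x A. 1 + norm (f n)) - 1"
    using insert.hyps by (simp add: algebra_simps)
  finally show ?case by - (simp_all add: mult_left_mono)
qed simp_all

lemma norm_prod_le_exp:
  fixes f :: "'b \<Rightarrow> complex"
  shows "norm (prod (\<lambda>n. 1 + f n) A) \<le> exp (sum (\<lambda>n. norm (f n)) A)"
proof -
  have "norm (prod (\<lambda>n. 1 + f n) A) = prod (\<lambda>n. norm (1 + f n)) A" by (simp add: prod_norm)
  also have "\<dots> \<le> prod (\<lambda>n. 1 + norm (f n)) A"
    by (intro prod_mono conjI) (auto intro: order.trans[OF norm_triangle_ineq])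
  also have "\<dots> \<le> exp (sum (\<lambda>n. norm (f n)) A)" by (rule prod_le_exp_sum) auto
  finally show ?thesis .
qed

lemma norm_prod_minus1_exp:
  fixes f :: "'b \<Rightarrow> complex"
  shows "norm (prod (\<lambda>n. 1 + f n) A - 1) \<le> exp (sum (\<lambda>n. norm (f n)) A) - 1"
  using norm_prod_minus1_gen[of f A] prod_le_exp_sum[of A "\<lambda>n. norm (f n)"] by simp

lemma prod_diff_bound:
  fixes f :: "'b \<Rightarrow> complex"
  assumes "finite G" "F \<subseteq> G"
  shows "norm (prod (\<lambda>n. 1 + f n) G - prod (\<lambda>n. 1 + f n) F)
          \<le> exp (sum (\<lambda>n. norm (f n)) F) * (exp (sum (\<lambda>n. norm (f n)) (G - F)) - 1)"
proof -
  have "prod (\<lambda>n. 1 + f n) G = prod (\<lambda>n. 1 + f n) (G - F) * prod (\<lambda>n. 1 + f n) F"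
    by (rule prod.subset_diff[OF assms(2,1)])
  hence "prod (\<lambda>n. 1 + f n) G - prod (\<lambda>n. 1 + f n) F =
           prod (\<lambda>n. 1 + f n) F * (prod (\<lambda>n. 1 + f n) (G - F) - 1)" by (simp add: algebra_simps)
  hence "norm (prod (\<lambda>n. 1 + f n) G - prod (\<lambda>n. 1 + f n) F) =
           norm (prod (\<lambda>n. 1 + f n) F) * norm (prod (\<lambda>n. 1 + f n) (G - F) - 1)"
    by (simp add: norm_mult)
  also have "\<dots> \<le> exp (sum (\<lambda>n. norm (f n)) F) * (exp (sum (\<lambda>n. norm (f n)) (G - F)) - 1)"
    by (intro mult_mono norm_prod_le_exp norm_prod_minus1_exp) auto
  finally show ?thesis .
qed

lemma pow2_le1: "x \<le> 0 \<Longrightarrow> (2::real) powr x \<le> 1"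
  using powr_mono[of x 0 2] by simp

definition KZ :: "complex list \<Rightarrow> real \<Rightarrow> real" where
  "KZ vs \<sigma>0 = zr 2 \<sigma>0 * (1 / (1 - yy vs)) ^ length vs"

lemma KZ_nonneg: "\<forall>v\<in>set vs. Re v > 0 \<Longrightarrow> 1 < \<sigma>0 \<Longrightarrow> KZ vs \<sigma>0 \<ge> 0"
  unfolding KZ_def using yy_less1[of vs] by (intro mult_nonneg_nonneg zr_nonneg zero_le_power) auto

lemma SB:
  assumes pos: "\<forall>v\<in>set vs. Re v > 0" and \<sigma>: "1 < \<sigma>0" "\<sigma>0 \<le> Re s"
      and F: "finite F" "F \<subseteq> multi_idx (length vs)"
  shows "(\<Sum>n\<in>F. norm (Z_factor vs s n - 1)) \<le> KZ vs \<sigma>0 * 2 powr (\<sigma>0 - Re s)"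
    and "F \<inter> idx_box (length vs) N = {} \<Longrightarrow> (\<Sum>n\<in>F. norm (Z_factor vs s n - 1)) \<le> KZ vs \<sigma>0 * yy vs ^ N"
proof -
  define Y where "Y = yy vs"
  define r where "r = length vs"
  define C where "C = zr 2 \<sigma>0 * 2 powr (\<sigma>0 - Re s)"
  have Y: "0 < Y" "Y < 1" using yy_pos yy_less1[OF pos] by (auto simp: Y_def)
  have C: "C \<ge> 0" using zr_nonneg[of \<sigma>0 2] \<sigma> by (simp add: C_def)
  have C1: "C \<le> zr 2 \<sigma>0" unfolding C_def using zr_nonneg[of \<sigma>0 2] \<sigma>
    by (intro mult_left_le pow2_le1) auto
  have kb: "norm (Z_factor vs s n - 1) \<le> C * (Y ^ absn r n * Y ^ absn r n)" for n
    using KB[OF pos \<sigma>, of n] by (simp add: C_def Y_def r_def)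
  have Ypow: "Y ^ k \<le> 1" for k using Y by (simp add: power_le_one)
  have geo: "(\<Sum>n\<in>F. Y ^ absn r n) \<le> (1 / (1 - Y)) ^ r"
    by (rule finite_sum_le) (use Y F in \<open>auto simp: r_def\<close>)
  have "(\<Sum>n\<in>F. norm (Z_factor vs s n - 1)) \<le> (\<Sum>n\<in>F. C * (Y ^ absn r n * Y ^ absn r n))"
    by (intro sum_mono kb)
  also have "\<dots> \<le> (\<Sum>n\<in>F. C * Y ^ absn r n)"
    by (intro sum_mono mult_left_mono C) (use Y Ypow in \<open>auto intro: mult_left_le\<close>)
  also have "\<dots> = C * (\<Sum>n\<in>F. Y ^ absn r n)" by (simp add: sum_distrib_left)
  also have "\<dots> \<le> C * (1 / (1 - Y)) ^ r" by (intro mult_left_mono geo C)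
  finally show "(\<Sum>n\<in>F. norm (Z_factor vs s n - 1)) \<le> KZ vs \<sigma>0 * 2 powr (\<sigma>0 - Re s)"
    by (simp add: KZ_def C_def Y_def r_def mult_ac)
  assume disj: "F \<inter> idx_box (length vs) N = {}"
  have "(\<Sum>n\<in>F. norm (Z_factor vs s n - 1)) \<le> (\<Sum>n\<in>F. C * (Y ^ absn r n * Y ^ absn r n))"
    by (intro sum_mono kb)
  also have "\<dots> \<le> (\<Sum>n\<in>F. zr 2 \<sigma>0 * (Y ^ N * Y ^ absn r n))"
  proof (intro sum_mono mult_mono mult_right_mono C1)
    fix n assume n: "n \<in> F"
    hence "absn r n \<ge> N" using disj F by (intro not_box_absn) (auto simp: r_def)
    thus "Y ^ absn r n \<le> Y ^ N" using Y by (intro power_decreasing) auto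
  qed (use Y C zr_nonneg[of \<sigma>0 2] \<sigma> in auto)
  also have "\<dots> = zr 2 \<sigma>0 * Y ^ N * (\<Sum>n\<in>F. Y ^ absn r n)" by (simp add: sum_distrib_left mult_ac)
  also have "\<dots> \<le> zr 2 \<sigma>0 * Y ^ N * (1 / (1 - Y)) ^ r"
    by (intro mult_left_mono geo) (use Y zr_nonneg[of \<sigma>0 2] \<sigma> in auto)
  finally show "(\<Sum>n\<in>F. norm (Z_factor vs s n - 1)) \<le> KZ vs \<sigma>0 * yy vs ^ N"
    by (simp add: KZ_def Y_def r_def mult_ac)
qed

definition dZ :: "complex list \<Rightarrow> real \<Rightarrow> nat \<Rightarrow> real" where
  "dZ vs \<sigma>0 N = exp (KZ vs \<sigma>0) * (exp (KZ vs \<sigma>0 * yy vs ^ N) - 1)"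

lemma dZ_tendsto:
  assumes "\<forall>v\<in>set vs. Re v > 0"
  shows "dZ vs \<sigma>0 \<longlonglongrightarrow> 0"
proof -
  have "norm (yy vs) < 1" using yy_pos[of vs] yy_less1[OF assms] by simp
  hence yl: "(\<lambda>N. yy vs ^ N) \<longlonglongrightarrow> 0" by (rule LIMSEQ_power_zero)
  have a: "(\<lambda>N. KZ vs \<sigma>0 * yy vs ^ N) \<longlonglongrightarrow> KZ vs \<sigma>0 * 0" by (intro tendsto_mult tendsto_const yl)
  have b: "(\<lambda>N. exp (KZ vs \<sigma>0 * yy vs ^ N)) \<longlonglongrightarrow> exp (KZ vs \<sigma>0 * 0)" by (rule tendsto_exp[OF a])
  have "(\<lambda>N. exp (KZ vs \<sigma>0) * (exp (KZ vs \<sigma>0 * yy vs ^ N) - 1)) \<longlonglongrightarrow> exp (KZ vs \<sigma>0) * (exp (KZ vs \<sigma>0 * 0) - 1)"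
    by (intro tendsto_mult tendsto_const tendsto_diff b)
  thus ?thesis unfolding dZ_def[abs_def] by simp
qed

lemma prod_box_bound:
  assumes pos: "\<forall>v\<in>set vs. Re v > 0" and \<sigma>: "1 < \<sigma>0" "\<sigma>0 \<le> Re s"
      and G: "finite G" "idx_box (length vs) N \<subseteq> G" "G \<subseteq> multi_idx (length vs)"
  shows "norm ((\<Prod>n\<in>G. Z_factor vs s n) - Z_partial vs s N) \<le> dZ vs \<sigma>0 N"
proof -
  let ?f = "\<lambda>n. Z_factor vs s n - 1"
  let ?B = "idx_box (length vs) N"
  have e1: "(\<Prod>n\<in>G. Z_factor vs s n) = (\<Prod>n\<in>G. 1 + ?f n)" by simp
  have e2: "Z_partial vs s N = (\<Prod>n\<in>?B. 1 + ?f n)" by (simp add: Z_partial_def)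
  have "norm ((\<Prod>n\<in>G. 1 + ?f n) - (\<Prod>n\<in>?B. 1 + ?f n))
          \<le> exp (sum (\<lambda>n. norm (?f n)) ?B) * (exp (sum (\<lambda>n. norm (?f n)) (G - ?B)) - 1)"
    by (rule prod_diff_bound[OF G(1,2)])
  also have "\<dots> \<le> exp (KZ vs \<sigma>0) * (exp (KZ vs \<sigma>0 * yy vs ^ N) - 1)"
  proof (intro mult_mono)
    have "sum (\<lambda>n. norm (?f n)) ?B \<le> KZ vs \<sigma>0 * 2 powr (\<sigma>0 - Re s)"
      by (rule SB(1)[OF pos \<sigma> finite_box box_sub_multi])
    also have "\<dots> \<le> KZ vs \<sigma>0"
      using KZ_nonneg[OF pos \<sigma>(1)] \<sigma> by (intro mult_left_le pow2_le1) auto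
    finally show "exp (sum (\<lambda>n. norm (?f n)) ?B) \<le> exp (KZ vs \<sigma>0)" by simp
    have "sum (\<lambda>n. norm (?f n)) (G - ?B) \<le> KZ vs \<sigma>0 * yy vs ^ N"
      by (rule SB(2)[OF pos \<sigma>]) (use G in auto)
    thus "exp (sum (\<lambda>n. norm (?f n)) (G - ?B)) - 1 \<le> exp (KZ vs \<sigma>0 * yy vs ^ N) - 1" by simp
    show "exp (sum (\<lambda>n. norm (?f n)) (G - ?B)) - 1 \<ge> 0" by (simp add: sum_nonneg)
  qed auto
  finally show ?thesis unfolding e1 e2 dZ_def .
qed

lemma Zpartial_conv:
  assumes pos: "\<forall>v\<in>set vs. Re v > 0" and s: "Re s > 1"
  shows "Z_partial vs s \<longlonglongrightarrow> Z_prod vs s"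
proof -
  define \<sigma>0 where "\<sigma>0 = Re s"
  have \<sigma>: "1 < \<sigma>0" "\<sigma>0 \<le> Re s" using s by (auto simp: \<sigma>0_def)
  have bnd: "norm (Z_partial vs s M - Z_partial vs s N) \<le> dZ vs \<sigma>0 N" if "N \<le> M" for N M
    using prod_box_bound[OF pos \<sigma> finite_box box_mono[OF that] box_sub_multi]
    by (simp add: Z_partial_def)
  have "Cauchy (Z_partial vs s)"
    unfolding Cauchy_def
  proof (intro allI impI)
    fix e :: real assume e: "e > 0"
    have "eventually (\<lambda>N. dZ vs \<sigma>0 N < e) sequentially"
      using dZ_tendsto[OF pos, of \<sigma>0] e by (rule order_tendstoD)
    then obtain M where M: "\<And>N. N \<ge> M \<Longrightarrow> dZ vs \<sigma>0 N < e"
      unfolding eventually_sequentially by blast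
    show "\<exists>M. \<forall>m\<ge>M. \<forall>n\<ge>M. dist (Z_partial vs s m) (Z_partial vs s n) < e"
    proof (intro exI allI impI)
      fix m n assume mn: "m \<ge> M" "n \<ge> M"
      show "dist (Z_partial vs s m) (Z_partial vs s n) < e"
      proof (cases "n \<le> m")
        case True
        thus ?thesis using bnd[OF True] M[OF mn(2)] by (simp add: dist_norm)
      next
        case False
        thus ?thesis using bnd[of m n] M[OF mn(1)] by (simp add: dist_norm norm_minus_commute)
      qed
    qed
  qed
  hence "convergent (Z_partial vs s)" by (simp add: Cauchy_convergent_iff)
  thus ?thesis unfolding Z_prod_def by (simp add: convergent_LIMSEQ_iff)
qed

lemma Zprod_bound:
  assumes pos: "\<forall>v\<in>set vs. Re v > 0" and \<sigma>: "1 < \<sigma>0" "\<sigma>0 \<le> Re s"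
  shows "norm (Z_prod vs s - Z_partial vs s N) \<le> dZ vs \<sigma>0 N"
proof -
  have lim: "Z_partial vs s \<longlonglongrightarrow> Z_prod vs s" using Zpartial_conv[OF pos] \<sigma> by simp
  have "(\<lambda>M. norm (Z_partial vs s M - Z_partial vs s N)) \<longlonglongrightarrow> norm (Z_prod vs s - Z_partial vs s N)"
    by (intro tendsto_norm tendsto_diff lim tendsto_const)
  moreover have "eventually (\<lambda>M. norm (Z_partial vs s M - Z_partial vs s N) \<le> dZ vs \<sigma>0 N) sequentially"
    using eventually_ge_at_top[of N]
  proof eventually_elim
    case (elim M)
    show ?case using prod_box_bound[OF pos \<sigma> finite_box box_mono[OF elim] box_sub_multi]
      by (simp add: Z_partial_def)
  qed
  ultimately show ?thesis
    by (intro tendsto_le[OF trivial_limit_sequentially tendsto_const]) auto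
qed

lemma Z_factor_holo:
  assumes pos: "\<forall>v\<in>set vs. Re v > 0"
  shows "(\<lambda>s. Z_factor vs s n) holomorphic_on {s. Re s > 1}"
  unfolding Z_factor_def zeta_series_zt
proof (rule zt_shift_holo)
  fix s assume "s \<in> {s. Re s > 1}"
  moreover have "Re (s + (\<Sum>i<length vs. of_nat (n i) * vs ! i)) \<ge> Re s + cmin vs * real (absn (length vs) n)"
    by (rule Re_shift_ge[OF pos])
  moreover have "cmin vs * real (absn (length vs) n) \<ge> 0" using cmin_pos[OF pos] by simp
  ultimately show "Re (s + (\<Sum>i<length vs. of_nat (n i) * vs ! i)) > 1" by simp
qed auto

lemma Zprod_holo:
  assumes pos: "\<forall>v\<in>set vs. Re v > 0"
  shows "Z_prod vs holomorphic_on {s. Re s > 1}"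
proof (rule holomorphic_uniform_sequence[OF H_open, where f="\<lambda>N s. Z_partial vs s N"])
  fix N
  show "(\<lambda>s. Z_partial vs s N) holomorphic_on {s. Re s > 1}"
    unfolding Z_partial_def by (intro holomorphic_on_prod Z_factor_holo pos)
next
  fix x :: complex assume x: "x \<in> {s. Re s > 1}"
  define d where "d = (Re x - 1) / 2"
  have d: "d > 0" using x by (auto simp: d_def)
  have sub: "cball x d \<subseteq> {s. Re s \<ge> 1 + d}"
  proof
    fix y assume "y \<in> cball x d"
    hence "\<bar>Re x - Re y\<bar> \<le> d" using abs_Re_le_cmod[of "x - y"] by (auto simp: dist_norm)
    hence "Re x - Re y \<le> d" by (rule abs_le_D1)
    thus "y \<in> {s. Re s \<ge> 1 + d}" unfolding d_def by (simp add: field_simps)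
  qed
  have "uniform_limit (cball x d) (\<lambda>N s. Z_partial vs s N) (Z_prod vs) sequentially"
  proof (rule uniform_limitI)
    fix e :: real assume e: "e > 0"
    have "eventually (\<lambda>N. dZ vs (1 + d) N < e) sequentially"
      using dZ_tendsto[OF pos, of "1 + d"] e by (rule order_tendstoD)
    thus "eventually (\<lambda>N. \<forall>s\<in>cball x d. dist (Z_partial vs s N) (Z_prod vs s) < e) sequentially"
    proof eventually_elim
      case (elim N)
      show ?case
      proof
        fix s assume "s \<in> cball x d"
        hence "1 + d \<le> Re s" using sub by auto
        hence "norm (Z_prod vs s - Z_partial vs s N) \<le> dZ vs (1 + d) N"
          using d by (intro Zprod_bound pos) auto
        thus "dist (Z_partial vs s N) (Z_prod vs s) < e"
          using elim by (simp add: dist_norm norm_minus_commute)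
      qed
    qed
  qed
  moreover have "cball x d \<subseteq> {s. Re s > 1}" using sub d by auto
  ultimately show "\<exists>d>0. cball x d \<subseteq> {s. Re s > 1} \<and>
          uniform_limit (cball x d) (\<lambda>N s. Z_partial vs s N) (Z_prod vs) sequentially"
    using d by (intro exI[of _ d] conjI)
qed

lemma Zprod_nonzero:
  assumes pos: "\<forall>v\<in>set vs. Re v > 0"
  shows "\<exists>R\<ge>2. \<forall>s. Re s \<ge> R \<longrightarrow> Z_prod vs s \<noteq> 0"
proof -
  define K where "K = KZ vs 2"
  have K: "K \<ge> 0" using KZ_nonneg[OF pos, of 2] by (simp add: K_def)
  define R where "R = 2 + log 2 (2 * (K + 1))"
  have R: "R \<ge> 2" using K by (simp add: R_def)
  have "Z_prod vs s \<noteq> 0" if s: "Re s \<ge> R" for s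
  proof -
    have s2: "Re s \<ge> 2" using s R by simp
    have "2 powr (2 - Re s) \<le> 2 powr (- log 2 (2 * (K + 1)))"
      using s by (intro powr_mono) (auto simp: R_def)
    also have "\<dots> = inverse (2 * (K + 1))"
      using K by (simp add: powr_minus powr_log_cancel)
    finally have p: "2 powr (2 - Re s) \<le> inverse (2 * (K + 1))" .
    have Kp: "K * 2 powr (2 - Re s) \<le> 1/2"
    proof -
      have "K * 2 powr (2 - Re s) \<le> K * inverse (2 * (K + 1))" by (intro mult_left_mono p K)
      also have "\<dots> \<le> 1/2" using K by (simp add: field_simps)
      finally show ?thesis .
    qed
    have bN: "norm (Z_partial vs s N - 1) \<le> 3/4" for N
    proof -
      have "norm (Z_partial vs s N - 1) = norm ((\<Prod>n\<in>idx_box (length vs) N. 1 + (Z_factor vs s n - 1)) - 1)"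
        by (simp add: Z_partial_def)
      also have "\<dots> \<le> exp (\<Sum>n\<in>idx_box (length vs) N. norm (Z_factor vs s n - 1)) - 1"
        by (rule norm_prod_minus1_exp)
      also have "(\<Sum>n\<in>idx_box (length vs) N. norm (Z_factor vs s n - 1)) \<le> K * 2 powr (2 - Re s)"
        unfolding K_def by (rule SB(1)[OF pos _ s2 finite_box box_sub_multi]) simp
      hence "exp (\<Sum>n\<in>idx_box (length vs) N. norm (Z_factor vs s n - 1)) \<le> exp (1/2)"
        using Kp by simp
      also have "exp (1/2::real) \<le> 1 + 1/2 + (1/2)^2" by (rule exp_bound) auto
      finally show ?thesis by (simp add: power2_eq_square)
    qed
    have lim: "Z_partial vs s \<longlonglongrightarrow> Z_prod vs s" using Zpartial_conv[OF pos] s2 by simp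
    have "(\<lambda>N. norm (Z_partial vs s N - 1)) \<longlonglongrightarrow> norm (Z_prod vs s - 1)"
      by (intro tendsto_norm tendsto_diff lim tendsto_const)
    hence "norm (Z_prod vs s - 1) \<le> 3/4"
      by (rule tendsto_le[OF trivial_limit_sequentially tendsto_const]) (use bN in auto)
    thus ?thesis by auto
  qed
  thus ?thesis using R by blast
qed

lemma Z_summable:
  assumes pos: "\<forall>v\<in>set vs. Re v > 0" and s: "Re s > 1"
  shows "(\<lambda>n. norm (Z_factor vs s n - 1)) summable_on multi_idx (length vs)"
proof (rule nonneg_bdd_above_summable_on)
  show "bdd_above (sum (\<lambda>n. norm (Z_factor vs s n - 1)) ` {F. F \<subseteq> multi_idx (length vs) \<and> finite F})"
  proof (rule bdd_aboveI2)
    fix F assume F: "F \<in> {F. F \<subseteq> multi_idx (length vs) \<and> finite F}"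
    show "sum (\<lambda>n. norm (Z_factor vs s n - 1)) F \<le> KZ vs (Re s) * 2 powr (Re s - Re s)"
      by (rule SB(1)[OF pos]) (use F s in auto)
  qed
qed auto

lemma Z_lim_gen:
  assumes pos: "\<forall>v\<in>set vs. Re v > 0" and s: "Re s > 1"
      and A: "\<And>N. finite (A N)" "\<And>N. idx_box (length vs) (g N) \<subseteq> A N" "\<And>N. A N \<subseteq> multi_idx (length vs)"
      and g: "filterlim g at_top sequentially"
  shows "(\<lambda>N. \<Prod>n\<in>A N. Z_factor vs s n) \<longlonglongrightarrow> Z_prod vs s"
proof -
  define \<sigma>0 where "\<sigma>0 = Re s"
  have \<sigma>: "1 < \<sigma>0" "\<sigma>0 \<le> Re s" using s by (auto simp: \<sigma>0_def)
  have l1: "(\<lambda>N. Z_partial vs s (g N)) \<longlonglongrightarrow> Z_prod vs s"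
    by (rule filterlim_compose[OF Zpartial_conv[OF pos s] g])
  have l2: "(\<lambda>N. dZ vs \<sigma>0 (g N)) \<longlonglongrightarrow> 0"
    by (rule filterlim_compose[OF dZ_tendsto[OF pos] g])
  have "(\<lambda>N. (\<Prod>n\<in>A N. Z_factor vs s n) - Z_partial vs s (g N)) \<longlonglongrightarrow> 0"
  proof (rule Lim_null_comparison[OF _ l2])
    show "eventually (\<lambda>N. norm ((\<Prod>n\<in>A N. Z_factor vs s n) - Z_partial vs s (g N)) \<le> dZ vs \<sigma>0 (g N)) sequentially"
      by (intro always_eventually allI prod_box_bound[OF pos \<sigma> A(1) A(2) A(3)])
  qed
  hence "(\<lambda>N. ((\<Prod>n\<in>A N. Z_factor vs s n) - Z_partial vs s (g N)) + Z_partial vs s (g N)) \<longlonglongrightarrow> 0 + Z_prod vs s"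
    by (intro tendsto_add l1)
  thus ?thesis by simp
qed

lemma sum_upd_lt:
  fixes vs' :: "complex list"
  shows "(\<Sum>i<length vs'. of_nat ((m(length vs' := x)) i) * (vs' @ [a]) ! i) =
         (\<Sum>i<length vs'. of_nat (m i) * vs' ! i)"
  by (intro sum.cong) (auto simp: nth_append)

lemma sum_nth_app:
  "(\<Sum>i<length vs'. f i * (vs' @ [a]) ! i) = (\<Sum>i<length vs'. f i * (vs' ! i :: complex))"
  by (intro sum.cong) (auto simp: nth_append)

lemma box_split:
  fixes vs' :: "complex list" and a :: complex
  defines "vs \<equiv> vs' @ [a]" and "r' \<equiv> length vs'"
  assumes N: "N \<ge> 1"
  shows "Z_partial vs s N = Z_partial vs' s N *
           (\<Prod>m\<in>PiE {..<Suc r'} (\<lambda>i. if i < r' then {..<N} else {..<N - 1}). Z_factor vs (s + a) m)"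
proof -
  have lvs: "length vs = Suc r'" by (simp add: vs_def r'_def)
  let ?B = "idx_box (length vs) N"
  let ?Z = "{n::nat\<Rightarrow>nat. n r' = 0}"
  have "Z_partial vs s N = (\<Prod>n\<in>?B \<inter> ?Z. Z_factor vs s n) * (\<Prod>n\<in>?B - ?Z. Z_factor vs s n)"
    unfolding Z_partial_def by (rule prod.Int_Diff[OF finite_box])
  moreover have "(\<Prod>n\<in>?B \<inter> ?Z. Z_factor vs s n) = Z_partial vs' s N"
    unfolding Z_partial_def
  proof (rule prod.reindex_bij_witness[where i="\<lambda>n. n(r' := undefined)" and j="\<lambda>m. m(r' := 0)", symmetric])
    fix m assume m: "m \<in> idx_box (length vs') N"
    hence mr: "m r' = undefined" by (auto simp: idx_box_def r'_def PiE_iff extensional_def)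
    show "(m(r' := 0))(r' := undefined) = m" using mr by auto
    show "m(r' := 0) \<in> ?B \<inter> ?Z" using m N unfolding lvs
      by (auto simp: idx_box_def r'_def PiE_iff extensional_def)
    show "Z_factor vs s (m(r' := 0)) = Z_factor vs' s m"
    proof -
      have "(\<Sum>i<Suc r'. of_nat ((m(r':=0)) i) * vs ! i) = (\<Sum>i<r'. of_nat ((m(r':=0)) i) * vs ! i)"
        by simp
      also have "\<dots> = (\<Sum>i<r'. of_nat (m i) * vs' ! i)"
        by (rule sum.cong) (auto simp: vs_def r'_def nth_append)
      finally show ?thesis unfolding Z_factor_def lvs by (simp add: r'_def)
    qed
  next
    fix n assume n: "n \<in> ?B \<inter> ?Z"
    show "(n(r' := undefined))(r' := 0) = n" using n by auto
    show "n(r' := undefined) \<in> idx_box (length vs') N" using n unfolding lvs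
      by (auto simp: idx_box_def r'_def PiE_iff extensional_def)
  qed
  moreover have "(\<Prod>n\<in>?B - ?Z. Z_factor vs s n) =
      (\<Prod>m\<in>PiE {..<Suc r'} (\<lambda>i. if i < r' then {..<N} else {..<N - 1}). Z_factor vs (s + a) m)"
  proof (rule prod.reindex_bij_witness[where i="\<lambda>n. n(r' := n r' - 1)" and j="\<lambda>m. m(r' := Suc (m r'))", symmetric])
    fix m assume m: "m \<in> PiE {..<Suc r'} (\<lambda>i. if i < r' then {..<N} else {..<N - 1})"
    show "(m(r' := Suc (m r')))(r' := (m(r' := Suc (m r'))) r' - 1) = m" by auto
    have "m r' \<in> (if r' < r' then {..<N} else {..<N - 1})" by (rule PiE_mem[OF m]) simp
    hence "m r' < N - 1" by simp
    thus "m(r' := Suc (m r')) \<in> ?B - ?Z" using m unfolding lvs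
      by (auto simp: idx_box_def PiE_iff extensional_def split: if_splits)
    show "Z_factor vs s (m(r' := Suc (m r'))) = Z_factor vs (s + a) m"
    proof -
      have "(\<Sum>i<length vs. of_nat ((m(r' := Suc (m r'))) i) * vs ! i) =
            (\<Sum>i<length vs. of_nat (m i) * vs ! i) + a"
        unfolding lvs using sum_upd_lt[where vs'=vs' and m=m and x="Suc (m r')" and a=a] sum_upd_lt[where vs'=vs' and m=m and x="m r'" and a=a]
        by (simp add: vs_def r'_def algebra_simps)
      thus ?thesis unfolding Z_factor_def by (simp add: algebra_simps)
    qed
  next
    fix n assume n: "n \<in> ?B - ?Z"
    show "(n(r' := n r' - 1))(r' := Suc ((n(r' := n r' - 1)) r')) = n" using n by auto
    have "n \<in> PiE {..<Suc r'} (\<lambda>_. {..<N})" using n by (simp add: idx_box_def lvs)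
    hence "n r' \<in> {..<N}" by (rule PiE_mem) simp
    hence nr: "n r' < N" by simp
    have n0: "n r' \<noteq> 0" using n by simp
    have nB: "n \<in> PiE {..<Suc r'} (\<lambda>_. {..<N})" using n by (simp add: idx_box_def lvs)
    show "n(r' := n r' - 1) \<in> PiE {..<Suc r'} (\<lambda>i. if i < r' then {..<N} else {..<N - 1})"
    proof (rule PiE_I)
      fix i assume i: "i \<in> {..<Suc r'}"
      show "(n(r' := n r' - 1)) i \<in> (if i < r' then {..<N} else {..<N - 1})"
      proof (cases "i = r'")
        case True thus ?thesis using nr n0 by auto
      next
        case False
        have "n i \<in> {..<N}" by (rule PiE_mem[OF nB i])
        thus ?thesis using False i by auto
      qed
    next
      fix i assume i: "i \<notin> {..<Suc r'}"
      hence "n i = undefined" using nB by (auto simp: PiE_iff extensional_def)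
      thus "(n(r' := n r' - 1)) i = undefined" using i by auto
    qed
  qed
  ultimately show ?thesis by simp
qed

lemma Z_rel:
  assumes pos: "\<forall>v\<in>set vs. Re v > 0" and ne: "vs \<noteq> []" and s: "Re s > 1"
  shows "Z_prod vs s = Z_prod (butlast vs) s * Z_prod vs (s + last vs)"
proof -
  obtain vs' a where vs: "vs = vs' @ [a]" using ne by (cases vs rule: rev_cases) auto
  define r' where "r' = length vs'"
  have pos': "\<forall>v\<in>set vs'. Re v > 0" using pos by (simp add: vs)
  have a: "Re a > 0" using pos by (simp add: vs)
  define AA where "AA = (\<lambda>N::nat. PiE {..<Suc r'} (\<lambda>i. if i < r' then {..<N} else {..<N - 1}))"
  have l1: "Z_partial vs s \<longlonglongrightarrow> Z_prod vs s" by (rule Zpartial_conv[OF pos s])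
  have l2: "Z_partial vs' s \<longlonglongrightarrow> Z_prod vs' s" by (rule Zpartial_conv[OF pos' s])
  have l3: "(\<lambda>N. \<Prod>m\<in>AA N. Z_factor vs (s + a) m) \<longlonglongrightarrow> Z_prod vs (s + a)"
  proof (rule Z_lim_gen[OF pos _ _ _ _ filterlim_minus_const_nat_at_top[of 1]])
    show "Re (s + a) > 1" using s a by simp
    fix N
    show "finite (AA N)" unfolding AA_def by (intro finite_PiE) auto
    have lv: "length vs = Suc r'" by (simp add: vs r'_def)
    show "idx_box (length vs) (N - 1) \<subseteq> AA N"
      unfolding AA_def idx_box_def lv by (intro PiE_mono) auto
    show "AA N \<subseteq> multi_idx (length vs)"
      unfolding AA_def multi_idx_def lv by (intro PiE_mono) auto
  qed
  have "(\<lambda>N. Z_partial vs' s N * (\<Prod>m\<in>AA N. Z_factor vs (s + a) m)) \<longlonglongrightarrow> Z_prod vs' s * Z_prod vs (s + a)"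
    by (intro tendsto_mult l2 l3)
  moreover have "eventually (\<lambda>N. Z_partial vs' s N * (\<Prod>m\<in>AA N. Z_factor vs (s + a) m) = Z_partial vs s N) sequentially"
    using eventually_ge_at_top[of 1]
    by eventually_elim (simp add: AA_def r'_def vs box_split)
  ultimately have "Z_partial vs s \<longlonglongrightarrow> Z_prod vs' s * Z_prod vs (s + a)"
    by (rule Lim_transform_eventually)
  hence "Z_prod vs s = Z_prod vs' s * Z_prod vs (s + a)" by (rule LIMSEQ_unique[OF l1])
  thus ?thesis by (simp add: vs)
qed

definition NN :: "complex \<Rightarrow> complex \<Rightarrow> nat" where
  "NN a s = (LEAST N. Re (s + of_nat N * a) > 1)"

lemma NN_ex: "Re a > 0 \<Longrightarrow> \<exists>N. Re (s + of_nat N * a) > 1"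
proof -
  assume a: "Re a > 0"
  obtain N :: nat where "(1 - Re s) / Re a < real N" using reals_Archimedean2 by blast
  hence "1 - Re s < real N * Re a" using a by (simp add: field_simps)
  thus ?thesis by (intro exI[of _ N]) simp
qed

lemma NN_prop: "Re a > 0 \<Longrightarrow> Re (s + of_nat (NN a s) * a) > 1"
  unfolding NN_def by (rule LeastI_ex[OF NN_ex])

lemma NN_le: "Re (s + of_nat N * a) > 1 \<Longrightarrow> NN a s \<le> N"
  unfolding NN_def by (rule Least_le)

lemma NN_0: "Re s > 1 \<Longrightarrow> NN a s = 0"
  using NN_le[of s 0 a] by simp

lemma Re_mono_N: "Re a > 0 \<Longrightarrow> Re (s + of_nat N * a) > 1 \<Longrightarrow> N \<le> M \<Longrightarrow> Re (s + of_nat M * a) > 1"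
proof -
  assume a: "Re a > 0" and h: "Re (s + of_nat N * a) > 1" and NM: "N \<le> M"
  have "real N * Re a \<le> real M * Re a" using a NM by (intro mult_right_mono) auto
  thus ?thesis using h by simp
qed

lemma NN_shift:
  assumes a: "Re a > 0" and k: "NN a s = Suc k"
  shows "NN a (s + a) = k"
proof -
  have p: "Re (s + of_nat (Suc k) * a) > 1" using NN_prop[OF a, of s] k by simp
  have "Re (s + a + of_nat k * a) > 1" using p by (simp add: algebra_simps)
  hence le: "NN a (s + a) \<le> k" by (rule NN_le)
  have p2: "Re (s + a + of_nat (NN a (s + a)) * a) > 1" by (rule NN_prop[OF a])
  hence "Re (s + of_nat (Suc (NN a (s + a))) * a) > 1" by (simp add: algebra_simps)
  hence "NN a s \<le> Suc (NN a (s + a))" by (rule NN_le)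
  thus ?thesis using le k by simp
qed

primrec ZextR :: "complex list \<Rightarrow> complex \<Rightarrow> complex" where
  "ZextR [] = zeta_ext"
| "ZextR (a # rs) = (\<lambda>s. (\<Prod>m<NN a s. ZextR rs (s + of_nat m * a)) *
                          Z_prod (rev (a # rs)) (s + of_nat (NN a s) * a))"

definition ZE :: "complex list \<Rightarrow> complex \<Rightarrow> complex" where
  "ZE vs = ZextR (rev vs)"

lemma ZE_nil: "ZE [] = zeta_ext" by (simp add: ZE_def)

definition GG :: "complex list \<Rightarrow> complex \<Rightarrow> nat \<Rightarrow> complex \<Rightarrow> complex" where
  "GG vs a N s = (\<Prod>m<N. ZE vs (s + of_nat m * a)) * Z_prod (vs @ [a]) (s + of_nat N * a)"

lemma ZE_snoc: "ZE (vs @ [a]) s = GG vs a (NN a s) s"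
  by (simp add: ZE_def GG_def)

lemma Z_prod_nil: "Z_prod [] s = zeta_series s"
proof -
  have "idx_box 0 N = {\<lambda>_. undefined}" for N by (simp add: idx_box_def)
  hence "Z_partial [] s = (\<lambda>N. zeta_series s)"
    by (simp add: Z_partial_def Z_factor_def fun_eq_iff)
  thus ?thesis by (simp add: Z_prod_def)
qed

lemma ZE_props:
  assumes "\<forall>v\<in>set vs. Re v > 0"
  shows "(\<forall>s. Re s > 1 \<longrightarrow> ZE vs s = Z_prod vs s) \<and> ZE vs meromorphic_on UNIV"
  using assms
proof (induction vs rule: rev_induct)
  case Nil
  show ?case by (simp add: ZE_nil Z_prod_nil zeta_ext_eq zeta_ext_mero)
next
  case (snoc a vs)
  have pos: "\<forall>v\<in>set (vs @ [a]). Re v > 0" by fact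
  have pos': "\<forall>v\<in>set vs. Re v > 0" and a: "Re a > 0" using pos by auto
  note IH = snoc.IH[OF pos']
  have key: "GG vs a N s = GG vs a (Suc N) s" if h: "Re (s + of_nat N * a) > 1" for N s
  proof -
    have "Z_prod (vs @ [a]) (s + of_nat N * a) =
          Z_prod vs (s + of_nat N * a) * Z_prod (vs @ [a]) (s + of_nat N * a + a)"
      using Z_rel[OF pos _ h] by simp
    also have "Z_prod vs (s + of_nat N * a) = ZE vs (s + of_nat N * a)" using IH h by simp
    also have "s + of_nat N * a + a = s + of_nat (Suc N) * a" by (simp add: algebra_simps)
    finally show ?thesis unfolding GG_def by (simp add: mult_ac)
  qed
  have key2: "GG vs a N s = GG vs a (NN a s) s" if "N \<ge> NN a s" for N s
    using that
  proof (induction N rule: dec_induct)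
    case base thus ?case by simp
  next
    case (step n)
    have "Re (s + of_nat n * a) > 1" by (rule Re_mono_N[OF a NN_prop[OF a] step.hyps(1)])
    thus ?case using key step.IH by simp
  qed
  have eq1: "ZE (vs @ [a]) s = Z_prod (vs @ [a]) s" if "Re s > 1" for s
    using NN_0[OF that] by (simp add: ZE_snoc GG_def)
  have "ZE (vs @ [a]) meromorphic_on {z}" for z
  proof -
    define N0 where "N0 = NN a z"
    define U where "U = {s. Re s > 1 - real N0 * Re a}"
    have U: "open U" unfolding U_def by (rule open_halfspace_Re_gt)
    have zU: "z \<in> U" using NN_prop[OF a, of z] by (simp add: U_def N0_def)
    have eqU: "ZE (vs @ [a]) s = GG vs a N0 s" if "s \<in> U" for s
    proof -
      have "Re (s + of_nat N0 * a) > 1" using that by (simp add: U_def)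
      hence "NN a s \<le> N0" by (rule NN_le)
      thus ?thesis unfolding ZE_snoc by (rule key2[symmetric])
    qed
    have m1: "(\<lambda>s. ZE vs (s + of_nat m * a)) meromorphic_on {z}" for m
      by (rule meromorphic_on_compose[OF conjunct2[OF IH]]) (auto intro!: analytic_intros)
    have "(\<lambda>s. Z_prod (vs @ [a]) (s + of_nat N0 * a)) holomorphic_on U"
    proof -
      have "Z_prod (vs @ [a]) \<circ> (\<lambda>s. s + of_nat N0 * a) holomorphic_on U"
        by (rule holomorphic_on_compose_gen[OF _ Zprod_holo[OF pos]])
           (auto simp: U_def intro!: holomorphic_intros)
      thus ?thesis by (simp add: o_def)
    qed
    hence "(\<lambda>s. Z_prod (vs @ [a]) (s + of_nat N0 * a)) analytic_on U" using U by (simp add: analytic_on_open)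
    hence m2: "(\<lambda>s. Z_prod (vs @ [a]) (s + of_nat N0 * a)) meromorphic_on {z}"
      by (intro analytic_on_imp_meromorphic_on) (rule analytic_on_subset, use zU in auto)
    have "GG vs a N0 meromorphic_on {z}"
      unfolding GG_def[abs_def] by (intro meromorphic_on_mult meromorphic_on_prod m1 m2)
    moreover have "eventually (\<lambda>s. ZE (vs @ [a]) s = GG vs a N0 s) (at z)"
      using eventually_at_in_open'[OF U zU] by eventually_elim (rule eqU)
    ultimately show ?thesis
      by (subst meromorphic_on_cong[where g="GG vs a N0" and B="{z}"]) auto
  qed
  hence "ZE (vs @ [a]) meromorphic_on UNIV" using meromorphic_on_meromorphic_at by blast
  with eq1 show ?case by blast
qed

lemma ZE_rel:
  assumes pos: "\<forall>v\<in>set vs. Re v > 0" and ne: "vs \<noteq> []"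
  shows "ZE vs s = ZE (butlast vs) s * ZE vs (s + last vs)"
proof -
  obtain vs' a where vs: "vs = vs' @ [a]" using ne by (cases vs rule: rev_cases) auto
  have pos': "\<forall>v\<in>set vs'. Re v > 0" and a: "Re a > 0" using pos by (auto simp: vs)
  note P = ZE_props[OF pos] and P' = ZE_props[OF pos']
  show ?thesis
  proof (cases "NN a s")
    case 0
    hence s: "Re s > 1" using NN_prop[OF a, of s] by simp
    have s': "Re (s + a) > 1" using s a by simp
    have "ZE vs s = Z_prod vs s" using P s by blast
    also have "\<dots> = Z_prod vs' s * Z_prod vs (s + a)" using Z_rel[OF pos ne s] by (simp add: vs)
    also have "Z_prod vs' s = ZE vs' s" using P' s by simp
    also have "Z_prod vs (s + a) = ZE vs (s + a)" using P s' by simp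
    finally show ?thesis by (simp add: vs)
  next
    case (Suc k)
    have k: "NN a (s + a) = k" by (rule NN_shift[OF a Suc])
    have "ZE vs s = GG vs' a (Suc k) s" unfolding vs ZE_snoc Suc ..
    also have "\<dots> = ZE vs' s * GG vs' a k (s + a)"
      unfolding GG_def prod.lessThan_Suc_shift
      by (simp add: algebra_simps)
    also have "GG vs' a k (s + a) = ZE vs (s + a)" unfolding vs ZE_snoc k ..
    finally show ?thesis by (simp add: vs)
  qed
qed

definition PP :: "complex list \<Rightarrow> (complex \<Rightarrow> complex) \<Rightarrow> complex \<Rightarrow> complex" where
  "PP vs F s = (\<Prod>K\<in>Pow {..<length vs}. F (s + (\<Sum>k\<in>K. vs ! k)) powi ((-1) ^ card K))"

lemma PP_snoc: "PP (vs @ [a]) F s = PP vs (\<lambda>t. F t * inverse (F (t + a))) s"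
proof -
  define r where "r = length vs"
  define g where "g = (\<lambda>K. F (s + (\<Sum>k\<in>K. (vs @ [a]) ! k)) powi ((-1) ^ card K))"
  have P: "Pow {..<length (vs @ [a])} = Pow {..<r} \<union> insert r ` Pow {..<r}"
    by (simp add: r_def lessThan_Suc Pow_insert)
  have disj: "Pow {..<r} \<inter> insert r ` Pow {..<r} = {}" by auto
  have inj: "inj_on (insert r) (Pow {..<r})"
    by (rule inj_onI) (auto simp: insert_ident subset_iff)
  have s1: "(\<Sum>k\<in>K. (vs @ [a]) ! k) = (\<Sum>k\<in>K. vs ! k)" if "K \<in> Pow {..<r}" for K
    using that by (intro sum.cong) (auto simp: nth_append r_def)
  have s2: "(\<Sum>k\<in>insert r K. (vs @ [a]) ! k) = a + (\<Sum>k\<in>K. vs ! k)" if K: "K \<in> Pow {..<r}" for K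
  proof -
    have fin: "finite K" using K finite_subset by auto
    have "r \<notin> K" using K by auto
    hence "(\<Sum>k\<in>insert r K. (vs @ [a]) ! k) = (vs @ [a]) ! r + (\<Sum>k\<in>K. (vs @ [a]) ! k)"
      using fin by simp
    thus ?thesis using s1[OF K] by (simp add: r_def)
  qed
  have c2: "card (insert r K) = Suc (card K)" if K: "K \<in> Pow {..<r}" for K
  proof -
    have fin: "finite K" using K finite_subset by auto
    have "r \<notin> K" using K by auto
    thus ?thesis using fin by simp
  qed
  have "PP (vs @ [a]) F s = prod g (Pow {..<r}) * prod g (insert r ` Pow {..<r})"
    unfolding PP_def g_def[symmetric] P by (rule prod.union_disjoint) (use disj in auto)
  also have "prod g (insert r ` Pow {..<r}) = prod (g \<circ> insert r) (Pow {..<r})"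
    by (rule prod.reindex[OF inj])
  also have "prod g (Pow {..<r}) * prod (g \<circ> insert r) (Pow {..<r}) =
       (\<Prod>K\<in>Pow {..<r}. g K * (g \<circ> insert r) K)" by (simp add: prod.distrib)
  also have "\<dots> = (\<Prod>K\<in>Pow {..<r}. (F (s + (\<Sum>k\<in>K. vs ! k)) * inverse (F (s + (\<Sum>k\<in>K. vs ! k) + a))) powi ((-1) ^ card K))"
  proof (rule prod.cong[OF refl])
    fix K assume K: "K \<in> Pow {..<r}"
    have e: "((-1::int) ^ card (insert r K)) = - ((-1) ^ card K)" using c2[OF K] by simp
    have "g K * (g \<circ> insert r) K = F (s + (\<Sum>k\<in>K. vs ! k)) powi ((-1) ^ card K) *
            F (s + (\<Sum>k\<in>K. vs ! k) + a) powi (- ((-1) ^ card K))"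
      unfolding g_def o_def s1[OF K] s2[OF K] e by (simp add: algebra_simps)
    also have "\<dots> = (F (s + (\<Sum>k\<in>K. vs ! k)) * inverse (F (s + (\<Sum>k\<in>K. vs ! k) + a))) powi ((-1) ^ card K)"
      by (simp add: power_int_mult_distrib power_int_minus power_int_inverse)
    finally show "g K * (g \<circ> insert r) K = \<dots>" .
  qed
  also have "\<dots> = PP vs (\<lambda>t. F t * inverse (F (t + a))) s"
    by (simp add: PP_def r_def)
  finally show ?thesis .
qed

lemma PP_cong:
  assumes "\<And>K. K \<subseteq> {..<length vs} \<Longrightarrow> F (s + (\<Sum>k\<in>K. vs ! k)) = G (s + (\<Sum>k\<in>K. vs ! k))"
  shows "PP vs F s = PP vs G s"
  unfolding PP_def by (rule prod.cong) (use assms in auto)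

lemma Re_sum_shift:
  assumes pos: "\<forall>v\<in>set vs. Re v > 0" and K: "K \<subseteq> {..<length vs}"
  shows "Re (s + (\<Sum>k\<in>K. vs ! k)) \<ge> Re s"
proof -
  have "0 \<le> (\<Sum>k\<in>K. Re (vs ! k))"
  proof (rule sum_nonneg)
    fix k assume "k \<in> K"
    hence "k < length vs" using K by auto
    hence "vs ! k \<in> set vs" by (rule nth_mem)
    thus "0 \<le> Re (vs ! k)" using pos by fastforce
  qed
  thus ?thesis by (simp add: Re_sum)
qed

lemma PP_Zprod:
  assumes "\<forall>v\<in>set vs. Re v > 0"
  shows "\<exists>R. \<forall>s. Re s > R \<longrightarrow> PP vs (Z_prod vs) s = zeta_series s"
  using assms
proof (induction vs rule: rev_induct)
  case Nil
  have "PP [] F s = F s" for F s by (simp add: PP_def)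
  thus ?case by (simp add: Z_prod_nil)
next
  case (snoc a vs)
  have pos: "\<forall>v\<in>set (vs @ [a]). Re v > 0" by fact
  have pos': "\<forall>v\<in>set vs. Re v > 0" using pos by auto
  from snoc.IH[OF pos'] obtain R1 where R1': "\<forall>s. Re s > R1 \<longrightarrow> PP vs (Z_prod vs) s = zeta_series s"
    by (elim exE)
  have R1: "PP vs (Z_prod vs) s = zeta_series s" if "Re s > R1" for s using R1' that by simp
  from Zprod_nonzero[OF pos] obtain R2 where R2': "R2 \<ge> 2 \<and> (\<forall>s. Re s \<ge> R2 \<longrightarrow> Z_prod (vs @ [a]) s \<noteq> 0)"
    by (elim exE)
  have R2ge: "R2 \<ge> 2" using R2' by simp
  have R2: "Z_prod (vs @ [a]) s \<noteq> 0" if "Re s \<ge> R2" for s using R2' that by auto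
  show ?case
  proof (intro exI[of _ "max R1 R2"] allI impI)
    fix s assume s: "Re s > max R1 R2"
    have "PP (vs @ [a]) (Z_prod (vs @ [a])) s =
          PP vs (\<lambda>t. Z_prod (vs @ [a]) t * inverse (Z_prod (vs @ [a]) (t + a))) s"
      by (rule PP_snoc)
    also have "\<dots> = PP vs (Z_prod vs) s"
    proof (rule PP_cong)
      fix K assume K: "K \<subseteq> {..<length vs}"
      define t where "t = s + (\<Sum>k\<in>K. vs ! k)"
      have t: "Re t \<ge> Re s" unfolding t_def by (rule Re_sum_shift[OF pos' K])
      have a: "Re a > 0" using pos by simp
      have t1: "Re t > 1" using t s R2ge by simp
      have nz: "Z_prod (vs @ [a]) (t + a) \<noteq> 0" using t s a by (intro R2) simp
      have "Z_prod (vs @ [a]) t = Z_prod vs t * Z_prod (vs @ [a]) (t + a)"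
        using Z_rel[OF pos _ t1] by simp
      thus "Z_prod (vs @ [a]) t * inverse (Z_prod (vs @ [a]) (t + a)) = Z_prod vs t"
        using nz by (simp add: field_simps)
    qed
    also have "\<dots> = zeta_series s" using s by (intro R1) simp
    finally show "PP (vs @ [a]) (Z_prod (vs @ [a])) s = zeta_series s" .
  qed
qed

lemma stmt_prod:
  "F s * (\<Prod>j\<in>{1..length ws}. \<Prod>K\<in>{K. K \<subseteq> {..<length ws} \<and> card K = j}.
               F (s + (\<Sum>k\<in>K. ws ! k)) powi ((-1) ^ j)) = PP ws F s"
proof -
  define r where "r = length ws"
  define g where "g = (\<lambda>K. F (s + (\<Sum>k\<in>K. ws ! k)) powi ((-1) ^ card K))"
  define S where "S = (\<lambda>j. {K. K \<subseteq> {..<r} \<and> card K = j})"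
  have finS: "finite (S j)" for j unfolding S_def by (rule finite_subset[of _ "Pow {..<r}"]) auto
  have "(\<Prod>j\<in>{1..r}. \<Prod>K\<in>S j. F (s + (\<Sum>k\<in>K. ws ! k)) powi ((-1) ^ j)) = (\<Prod>j\<in>{1..r}. prod g (S j))"
    by (intro prod.cong refl) (auto simp: S_def g_def)
  also have "\<dots> = prod g (\<Union>(S ` {1..r}))"
    by (rule prod.UNION_disjoint[symmetric]) (auto simp: finS S_def)
  also have "\<Union>(S ` {1..r}) = Pow {..<r} - {{}}"
  proof (intro equalityI subsetI)
    fix K assume "K \<in> \<Union>(S ` {1..r})"
    then obtain j where j: "j \<in> {1..r}" "K \<subseteq> {..<r}" "card K = j" by (auto simp: S_def)
    thus "K \<in> Pow {..<r} - {{}}" by auto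
  next
    fix K assume K: "K \<in> Pow {..<r} - {{}}"
    have fin: "finite K" using K finite_subset by auto
    have "card K \<le> r" using K card_mono[of "{..<r}" K] by auto
    moreover have "card K \<ge> 1" using K fin by (auto simp: Suc_le_eq card_gt_0_iff)
    ultimately show "K \<in> \<Union>(S ` {1..r})" using K by (auto simp: S_def)
  qed
  finally have *: "(\<Prod>j\<in>{1..r}. \<Prod>K\<in>S j. F (s + (\<Sum>k\<in>K. ws ! k)) powi ((-1) ^ j)) = prod g (Pow {..<r} - {{}})" .
  have "PP ws F s = g {} * prod g (Pow {..<r} - {{}})"
    unfolding PP_def g_def[symmetric] r_def[symmetric] by (rule prod.remove) auto
  also have "g {} = F s" by (simp add: g_def)
  finally show ?thesis using * by (simp add: S_def r_def)
qed

lemma PP_mero: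
  assumes "F meromorphic_on UNIV"
  shows "(\<lambda>s. PP vs F s) meromorphic_on UNIV"
  unfolding PP_def
proof (intro meromorphic_on_prod meromorphic_on_powi)
  fix K
  show "(\<lambda>s. F (s + (\<Sum>k\<in>K. vs ! k))) meromorphic_on UNIV"
    by (rule meromorphic_on_compose[OF assms]) (auto intro!: analytic_intros)
qed

theorem proposition3p3p2:
  fixes ws :: "complex list"
  assumes "length ws \<ge> 1"
    and "\<forall>w\<in>set ws. Re w > 0"
  shows "(\<forall>s. Re s > 1 \<longrightarrow>
            (\<lambda>n. norm (Z_factor ws s n - 1)) summable_on multi_idx (length ws)
          \<and> (Z_partial ws s \<longlonglongrightarrow> Z_prod ws s))
     \<and> (\<exists>Zext :: complex list \<Rightarrow> complex \<Rightarrow> complex.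
          (\<forall>vs. (\<forall>v\<in>set vs. Re v > 0) \<longrightarrow>
              Zext vs meromorphic_on UNIV \<and> (\<forall>s. Re s > 1 \<longrightarrow> Zext vs s = Z_prod vs s))
        \<and> (\<forall>\<^sub>\<approx>s. Zext ws s = Zext (butlast ws) s * Zext ws (s + last ws))
        \<and> (\<forall>\<^sub>\<approx>s. Zext ws s *
               (\<Prod>j\<in>{1..length ws}. \<Prod>K\<in>{K. K \<subseteq> {..<length ws} \<and> card K = j}.
                  Zext ws (s + (\<Sum>k\<in>K. ws ! k)) powi ((-1) ^ j))
             = Zext [] s))"
proof -
  have pos: "\<forall>v\<in>set ws. Re v > 0" using assms(2) .
  have ne: "ws \<noteq> []" using assms(1) by auto
  have C1: "\<forall>s. Re s > 1 \<longrightarrow>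
            (\<lambda>n. norm (Z_factor ws s n - 1)) summable_on multi_idx (length ws)
          \<and> (Z_partial ws s \<longlonglongrightarrow> Z_prod ws s)"
  proof (intro allI impI conjI)
    fix s :: complex assume s: "Re s > 1"
    show "(\<lambda>n. norm (Z_factor ws s n - 1)) summable_on multi_idx (length ws)" by (rule Z_summable[OF pos s])
    show "Z_partial ws s \<longlonglongrightarrow> Z_prod ws s" by (rule Zpartial_conv[OF pos s])
  qed
  have C2: "\<forall>vs. (\<forall>v\<in>set vs. Re v > 0) \<longrightarrow>
              ZE vs meromorphic_on UNIV \<and> (\<forall>s. Re s > 1 \<longrightarrow> ZE vs s = Z_prod vs s)"
  proof (intro allI impI)
    fix vs :: "complex list" assume h: "\<forall>v\<in>set vs. Re v > 0"
    from ZE_props[OF h] show "ZE vs meromorphic_on UNIV \<and> (\<forall>s. Re s > 1 \<longrightarrow> ZE vs s = Z_prod vs s)"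
      by simp
  qed
  have C3: "\<forall>\<^sub>\<approx>s. ZE ws s = ZE (butlast ws) s * ZE ws (s + last ws)"
    by (intro always_eventually allI ZE_rel[OF pos ne])
  from PP_Zprod[OF pos] obtain R where R: "\<forall>s. Re s > R \<longrightarrow> PP ws (Z_prod ws) s = zeta_series s"
    by (elim exE)
  define R' where "R' = max R 1"
  have mero: "(\<lambda>s. PP ws (ZE ws) s - ZE [] s) meromorphic_on UNIV"
  proof (rule meromorphic_on_diff)
    show "(\<lambda>s. PP ws (ZE ws) s) meromorphic_on UNIV" by (rule PP_mero) (use ZE_props[OF pos] in simp)
    show "ZE [] meromorphic_on UNIV" by (simp add: ZE_nil zeta_ext_mero)
  qed
  have "\<forall>\<^sub>\<approx>s\<in>UNIV. PP ws (ZE ws) s - ZE [] s = 0"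
  proof (rule mero_zero_on_open[OF mero open_UNIV connected_UNIV H_open[of R']])
    show "complex_of_real (R' + 1) \<in> {s. Re s > R'}" by simp
    show "{s. Re s > R'} \<subseteq> UNIV" by simp
    fix s assume s: "s \<in> {s. Re s > R'}"
    have "PP ws (ZE ws) s = PP ws (Z_prod ws) s"
    proof (rule PP_cong)
      fix K assume K: "K \<subseteq> {..<length ws}"
      have "Re (s + (\<Sum>k\<in>K. ws ! k)) > 1"
        using Re_sum_shift[OF pos K, of s] s by (simp add: R'_def)
      thus "ZE ws (s + (\<Sum>k\<in>K. ws ! k)) = Z_prod ws (s + (\<Sum>k\<in>K. ws ! k))"
        using ZE_props[OF pos] by blast
    qed
    also have "\<dots> = zeta_series s" using R s by (simp add: R'_def)
    also have "\<dots> = ZE [] s" using s by (simp add: ZE_nil zeta_ext_eq R'_def)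
    finally show "PP ws (ZE ws) s - ZE [] s = 0" by simp
  qed
  hence C4: "\<forall>\<^sub>\<approx>s. ZE ws s *
               (\<Prod>j\<in>{1..length ws}. \<Prod>K\<in>{K. K \<subseteq> {..<length ws} \<and> card K = j}.
                  ZE ws (s + (\<Sum>k\<in>K. ws ! k)) powi ((-1) ^ j))
             = ZE [] s"
    by (rule eventually_mono, subst stmt_prod, simp)
  show ?thesis
    by (intro conjI C1 exI[of _ ZE] C2 C3 C4)
qed

end
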